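(* Let $i\in\mathbb{N}_0$ and let $\alpha,\beta,\epsilon\in\mathbb{C}$. Then $$F^{1:1;2}_{1:0;1}\left[\begin{matrix}\alpha: & \epsilon\,; & \beta-\epsilon,\ 1-\alpha-\epsilon+i\,;\\ \beta: & -\,; & 1-\alpha-\epsilon+\beta+i\,;\end{matrix}\ \tfrac12,\ \tfrac12\right] =\frac{2^{i-\alpha}\,\Gamma(\beta-\epsilon-\alpha+i+1)\,\Gamma(\alpha-i)}{\Gamma(1-2\alpha-\epsilon+\beta+i)\,\Gamma(\alpha)}\sum_{r=0}^{i}(-1)^r\binom{i}{r}\frac{\Gamma\!\left(\frac{1-2\alpha-\epsilon+\beta+i+r}{2}\right)}{\Gamma\!\left(\frac{\beta-\epsilon-i+r+1}{2}\right)}$$ and $$F^{1:1;2}_{1:0;1}\left[\begin{matrix}\alpha: & \epsilon\,; & \beta-\epsilon,\ 1-\alpha-\epsilon-i\,;\\ \beta: & -\,; & 1-\alpha-\epsilon+\beta-i\,;\end{matrix}\ \tfrac12,\ \tfrac12\right] =\frac{2^{-\alpha-i}\,\Gamma(\beta-\epsilon-\alpha-i+1)}{\Gamma(1-2\alpha-\epsilon+\beta-i)}\sum_{r=0}^{i}\binom{i}{r}\frac{\Gamma\!\left(\frac{1-2\alpha-\epsilon+\beta-i+r}{2}\right)}{\Gamma\!\left(\frac{\beta-\epsilon-i+r+1}{2}\right)}.$$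
   Context: For $\lambda\in\mathbb{C}$ and $n\in\mathbb{N}_0$, $(\lambda)_0=1$ and $(\lambda)_n=\lambda(\lambda+1)\cdots(\lambda+n-1)$; $\Gamma$ is Euler's Gamma function and $\binom{i}{r}$ the binomial coefficient. The (generalized) Kampé de Fériet function is defined by $$F^{H:A;B}_{G:C;D}\left[\begin{matrix}(h_H): & (a_A)\,; & (b_B)\,;\\ (g_G): & (c_C)\,; & (d_D)\,;\end{matrix}\ x,\ y\right]=\sum_{m=0}^\infty\sum_{n=0}^\infty\frac{\prod_{j=1}^H(h_j)_{m+n}\prod_{j=1}^A(a_j)_m\prod_{j=1}^B(b_j)_n}{\prod_{j=1}^G(g_j)_{m+n}\prod_{j=1}^C(c_j)_m\prod_{j=1}^D(d_j)_n}\frac{x^m}{m!}\frac{y^n}{n!},$$ where a dash "$-$" denotes an empty list of parameters (empty products equal $1$). Parameters are tacitly assumed to be such that the double series converges, no denominator parameter is a non-positive integer, and all Gamma values appearing are finite. *)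

theory Defs
  imports "HOL-Analysis.Analysis"
begin

text \<open>General term of the Kampe de Feriet double series
  F^{H:A;B}_{G:C;D}[(h):(a);(b);(g):(c);(d); x, y].
  Parameter lists are Isabelle lists; the empty list stands for a dash.\<close>
definition kdf_term ::
  "complex list \<Rightarrow> complex list \<Rightarrow> complex list \<Rightarrow>
   complex list \<Rightarrow> complex list \<Rightarrow> complex list \<Rightarrow>
   complex \<Rightarrow> complex \<Rightarrow> nat \<Rightarrow> nat \<Rightarrow> complex" where
  "kdf_term hs as bs gs cs ds x y m n =
     (prod_list (map (\<lambda>h. pochhammer h (m + n)) hs)
      * prod_list (map (\<lambda>a. pochhammer a m) as)
      * prod_list (map (\<lambda>b. pochhammer b n) bs))
     / (prod_list (map (\<lambda>g. pochhammer g (m + n)) gs)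
      * prod_list (map (\<lambda>c. pochhammer c m) cs)
      * prod_list (map (\<lambda>d. pochhammer d n) ds))
     * (x ^ m / fact m) * (y ^ n / fact n)"

text \<open>Convergence of the double series (over all pairs (m,n); for complex
  terms this is absolute convergence).\<close>
definition kdf_converges ::
  "complex list \<Rightarrow> complex list \<Rightarrow> complex list \<Rightarrow>
   complex list \<Rightarrow> complex list \<Rightarrow> complex list \<Rightarrow>
   complex \<Rightarrow> complex \<Rightarrow> bool" where
  "kdf_converges hs as bs gs cs ds x y \<longleftrightarrow>
     (\<lambda>(m, n). kdf_term hs as bs gs cs ds x y m n) summable_on UNIV"

definition kdf ::
  "complex list \<Rightarrow> complex list \<Rightarrow> complex list \<Rightarrow>
   complex list \<Rightarrow> complex list \<Rightarrow> complex list \<Rightarrow>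
   complex \<Rightarrow> complex \<Rightarrow> complex" where
  "kdf hs as bs gs cs ds x y =
     (\<Sum>\<^sub>\<infinity>(m, n) \<in> UNIV. kdf_term hs as bs gs cs ds x y m n)"

end

theory Submission
  imports Defs
begin


lemma ratio_to_one:
  fixes a b :: "'a::real_normed_field"
  shows "(\<lambda>n. (a + of_nat n) / (b + of_nat n)) \<longlonglongrightarrow> 1"
proof -
  have 1: "(\<lambda>n. (a / of_nat n + 1) / (b / of_nat n + 1)) \<longlonglongrightarrow> (0 + 1) / (0 + 1)"
    by (intro tendsto_intros) auto
  have "eventually (\<lambda>n. (a / of_nat n + 1) / (b / of_nat n + 1) = (a + of_nat n) / (b + of_nat n)) sequentially"
    using eventually_gt_at_top[of "0::nat"]
  proof eventually_elim
    case (elim n)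
    hence nz: "(of_nat n :: 'a) \<noteq> 0" by simp
    have "(a / of_nat n + 1) = (a + of_nat n) / of_nat n" "(b / of_nat n + 1) = (b + of_nat n) / of_nat n"
      using nz by (simp_all add: field_simps)
    thus ?case using nz by simp
  qed
  with 1 show ?thesis by (simp add: tendsto_cong)
qed

lemma ratio_summable:
  fixes f :: "nat \<Rightarrow> 'a::banach"
  assumes ev: "eventually (\<lambda>n. norm (f (Suc n)) \<le> r n * norm (f n)) sequentially"
    and lim: "r \<longlonglongrightarrow> L" and L: "L < 1"
  shows "summable f"
proof -
  have "eventually (\<lambda>n. r n < (1 + L) / 2) sequentially"
    using lim L by (intro order_tendstoD) auto
  with ev have "eventually (\<lambda>n. norm (f (Suc n)) \<le> ((1 + L) / 2) * norm (f n)) sequentially"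
  proof eventually_elim
    case (elim n)
    have "r n * norm (f n) \<le> ((1 + L) / 2) * norm (f n)"
      using elim(2) by (intro mult_right_mono) auto
    with elim(1) show ?case by linarith
  qed
  then obtain N where N_def: "\<And>n. n \<ge> N \<Longrightarrow> norm (f (Suc n)) \<le> ((1 + L) / 2) * norm (f n)"
    by (auto simp: eventually_sequentially)
  show ?thesis by (rule summable_ratio_test[of "(1 + L) / 2" N]) (use L N_def in auto)
qed

definition hgt :: "complex \<Rightarrow> complex \<Rightarrow> complex \<Rightarrow> nat \<Rightarrow> complex" where
  "hgt a b c n = pochhammer a n * pochhammer b n * rGamma (c + of_nat n) / fact n / 2 ^ n"

definition hgr :: "complex \<Rightarrow> complex \<Rightarrow> complex \<Rightarrow> complex" where
  "hgr a b c = (\<Sum>n. hgt a b c n)"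

lemma aux: fixes u v w :: complex assumes "w \<noteq> 0" shows "u / w / 2 * (v * w * 2) = u * v"
  using assms by (simp add: field_simps)

lemma hgt_Suc:
  "hgt a b c (Suc n) * ((c + of_nat n) * (of_nat n + 1) * 2) = hgt a b c n * ((a + of_nat n) * (b + of_nat n))"
proof -
  define X where "X = pochhammer a n * pochhammer b n / (fact n * 2 ^ n)"
  have r: "(c + of_nat n) * rGamma (c + of_nat n + 1) = rGamma (c + of_nat n)"
    by (rule rGamma_plus1)
  have nz: "(of_nat n + 1 :: complex) \<noteq> 0"
    by (metis of_nat_Suc of_nat_eq_0_iff nat.distinct(1) add.commute)
  have h1: "hgt a b c n = X * rGamma (c + of_nat n)"
    unfolding hgt_def X_def by simp
  have h2: "hgt a b c (Suc n) = X * (a + of_nat n) * (b + of_nat n) * rGamma (c + of_nat n + 1) / (of_nat n + 1) / 2"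
    unfolding hgt_def X_def pochhammer_Suc by (simp add: field_simps add_ac)
  have "hgt a b c (Suc n) * ((c + of_nat n) * (of_nat n + 1) * 2) = X * (a + of_nat n) * (b + of_nat n) * ((c + of_nat n) * rGamma (c + of_nat n + 1))"
    unfolding h2 using aux[OF nz, of "X * (a + of_nat n) * (b + of_nat n) * rGamma (c + of_nat n + 1)" "c + of_nat n"]
    by (simp add: ac_simps)
  also have "\<dots> = X * (a + of_nat n) * (b + of_nat n) * rGamma (c + of_nat n)" by (simp only: r)
  finally show ?thesis unfolding h1 by (simp add: field_simps)
qed

lemma summable_hgt: "summable (hgt a b c)"
proof (rule ratio_summable)
  let ?r = "\<lambda>n. norm ((a + of_nat n) / (1 + of_nat n)) * norm ((b + of_nat n) / (c + of_nat n)) / 2"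
  show "?r \<longlonglongrightarrow> norm (1::complex) * norm (1::complex) / 2"
    by (intro tendsto_intros ratio_to_one) simp
  show "norm (1::complex) * norm (1::complex) / 2 < 1" by simp
  obtain N :: nat where N: "real N > norm c" using reals_Archimedean2 by blast
  have "eventually (\<lambda>n. n \<ge> N) sequentially" by simp
  then show "eventually (\<lambda>n. norm (hgt a b c (Suc n)) \<le> ?r n * norm (hgt a b c n)) sequentially"
  proof eventually_elim
    case (elim n)
    have "c + of_nat n \<noteq> 0"
    proof
      assume "c + of_nat n = 0"
      hence "c = - of_nat n" by (simp add: eq_neg_iff_add_eq_0)
      hence "norm c = real n" by simp
      with N elim show False by simp
    qed
    moreover have "(of_nat n + 1 :: complex) \<noteq> 0"
      by (metis of_nat_Suc of_nat_eq_0_iff nat.distinct(1) add.commute)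
    ultimately have D: "(c + of_nat n) * (of_nat n + 1) * 2 \<noteq> 0" by simp
    have "hgt a b c (Suc n) = hgt a b c (Suc n) * ((c + of_nat n) * (of_nat n + 1) * 2) / ((c + of_nat n) * (of_nat n + 1) * 2)"
      using D by simp
    hence "hgt a b c (Suc n) = hgt a b c n * ((a + of_nat n) * (b + of_nat n)) / ((c + of_nat n) * (of_nat n + 1) * 2)"
      by (simp only: hgt_Suc)
    hence "norm (hgt a b c (Suc n)) = norm (hgt a b c n) * (norm (a + of_nat n) * norm (b + of_nat n)) / (norm (c + of_nat n) * norm (of_nat n + 1 :: complex) * 2)"
      by (simp add: norm_mult norm_divide)
    thus ?case by (simp add: norm_mult norm_divide add.commute mult_ac)
  qed
qed


lemma hgt_0: "hgt a b c 0 = rGamma c" by (simp add: hgt_def)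

lemma hgt_Suc_expand:
  "hgt a b c (Suc n) = pochhammer a n * (a + of_nat n) * (pochhammer b n * (b + of_nat n))
      * rGamma (c + of_nat n + 1) / (fact n * (of_nat n + 1)) / (2 ^ n * 2)"
  by (simp add: hgt_def pochhammer_Suc add_ac mult_ac)

lemma rG1: "rGamma (x :: complex) = x * rGamma (x + 1)"
  by (simp add: rGamma_plus1)

lemma nz1: "(of_nat n + 1 :: complex) \<noteq> 0"
  by (metis of_nat_Suc of_nat_eq_0_iff nat.distinct(1) add.commute)

lemma hgt_P_term:
  "A * hgt (A + 1) b c n = hgt A b (c - 1) n - (c - A - 1) * hgt A b c n"
proof -
  have p: "A * pochhammer (A + 1) n = pochhammer A n * (A + of_nat n)"
    by (metis pochhammer_Suc pochhammer_rec)
  have r: "rGamma (c - 1 + of_nat n) = (c - 1 + of_nat n) * rGamma (c + of_nat n)"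
    using rG1[of "c - 1 + of_nat n"] by (simp add: add_ac)
  have "A * hgt (A + 1) b c n = (A * pochhammer (A + 1) n) * pochhammer b n * rGamma (c + of_nat n) / fact n / 2 ^ n"
    by (simp add: hgt_def mult_ac)
  also have "\<dots> = pochhammer A n * pochhammer b n * rGamma (c + of_nat n) / fact n / 2 ^ n * (A + of_nat n)"
    unfolding p by (simp add: mult_ac)
  also have "\<dots> = hgt A b (c - 1) n - (c - A - 1) * hgt A b c n"
    unfolding hgt_def r by (simp add: field_simps)
  finally show ?thesis .
qed

lemma suminf_lin2:
  fixes f g :: "nat \<Rightarrow> complex"
  assumes "summable f" "summable g"
  shows "(\<Sum>n. f n - k * g n) = suminf f - k * suminf g"
  using suminf_diff[OF assms(1) summable_mult[OF assms(2), of k]] suminf_mult[OF assms(2), of k] by simp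

lemma suminf_lin3:
  fixes f g h :: "nat \<Rightarrow> complex"
  assumes "summable f" "summable g" "summable h"
  shows "(\<Sum>n. f n - k * g n + l * h n) = suminf f - k * suminf g + l * suminf h"
proof -
  have "summable (\<lambda>n. f n - k * g n)" using assms by (intro summable_diff summable_mult)
  from suminf_add[OF this summable_mult[OF assms(3), of l]] suminf_lin2[OF assms(1,2)] suminf_mult[OF assms(3), of l]
  show ?thesis by simp
qed

lemma hgr_P: "A * hgr (A + 1) b c = hgr A b (c - 1) - (c - A - 1) * hgr A b c"
proof -
  have "A * hgr (A + 1) b c = (\<Sum>n. A * hgt (A + 1) b c n)"
    unfolding hgr_def by (rule suminf_mult[symmetric, OF summable_hgt])
  also have "\<dots> = (\<Sum>n. hgt A b (c - 1) n - (c - A - 1) * hgt A b c n)"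
    by (simp only: hgt_P_term)
  also have "\<dots> = hgr A b (c - 1) - (c - A - 1) * hgr A b c"
    unfolding hgr_def by (intro suminf_lin2 summable_hgt)
  finally show ?thesis .
qed

lemma shift_half:
  fixes al be :: "nat \<Rightarrow> complex"
  assumes "summable be" "al 0 = 0" "\<And>n. al (Suc n) = be n / 2"
  shows "summable al" "suminf al = suminf be / 2"
proof -
  have "(\<lambda>n. be n / 2) sums (suminf be / 2)"
    using assms(1) by (intro sums_divide summable_sums)
  moreover have "(\<lambda>n. al (Suc n)) = (\<lambda>n. be n / 2)" using assms(3) by auto
  ultimately have "(\<lambda>n. al (Suc n)) sums (suminf be / 2)" by simp
  hence s: "al sums (suminf be / 2 + al 0)" by (simp add: sums_Suc_iff)
  thus "summable al" by (auto simp: sums_iff)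
  from s show "suminf al = suminf be / 2" using assms(2) by (simp add: sums_iff)
qed

lemma absN: fixes P Q R F T N a b c :: complex
  assumes "F \<noteq> 0" "T \<noteq> 0" "N + 1 \<noteq> 0"
  shows "P*(a+N)*(Q*(b+N))*R/(F*(N+1))/(T*2) - P*(a+N)*((b-1)*Q)*R/(F*(N+1))/(T*2) = (P*Q*((c+N)*R)/F/T - (c-a)*(P*Q*R/F/T))/2"
proof -
  obtain M where M: "N = M - 1" "M \<noteq> 0" using assms(3) by (metis add_diff_cancel_right')
  show ?thesis unfolding M(1) using assms(1,2) M(2) by (simp add: field_simps)
qed
lemma absB: fixes P Q R F T N a b c :: complex
  assumes "F \<noteq> 0" "T \<noteq> 0" "N + 1 \<noteq> 0"
  shows "P*(a+N)*(Q*(b+N))*((c+N)*R)/(F*(N+1))/(T*2) - (c-1)*(P*(a+N)*(Q*(b+N))*R/(F*(N+1))/(T*2))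
   = (P*Q*((c-1+N)*((c+N)*R))/F/T - (2*c-a-b-1)*(P*Q*((c+N)*R)/F/T) + (c-a)*(c-b)*(P*Q*R/F/T))/2"
proof -
  obtain M where M: "N = M - 1" "M \<noteq> 0" using assms(3) by (metis add_diff_cancel_right')
  show ?thesis unfolding M(1) using assms(1,2) M(2) by (simp add: field_simps)
qed

lemma hgt_N_term:
  "hgt a b c (Suc n) - hgt a (b - 1) c (Suc n) = (hgt a b c n - (c - a) * hgt a b (c + 1) n) / 2"
proof -
  have pb: "pochhammer (b - 1) (Suc n) = (b - 1) * pochhammer b n"
    by (simp add: pochhammer_rec)
  have r: "rGamma (c + of_nat n) = (c + of_nat n) * rGamma (c + of_nat n + 1)"
    by (rule rG1)
  have e1: "hgt a (b - 1) c (Suc n) = pochhammer a n * (a + of_nat n) * ((b - 1) * pochhammer b n)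
      * rGamma (c + of_nat n + 1) / (fact n * (of_nat n + 1)) / (2 ^ n * 2)"
    unfolding hgt_def pb by (simp add: pochhammer_Suc add_ac mult_ac)
  have e2: "hgt a b (c + 1) n = pochhammer a n * pochhammer b n * rGamma (c + of_nat n + 1) / fact n / 2 ^ n"
    by (simp add: hgt_def add_ac)
  have e3: "hgt a b c n = pochhammer a n * pochhammer b n * ((c + of_nat n) * rGamma (c + of_nat n + 1)) / fact n / 2 ^ n"
    by (simp add: hgt_def r[symmetric])
  show ?thesis
    apply (simp only: e1 e2 e3)
    apply (subst hgt_Suc_expand)
    by (rule absN) (simp_all add: nz1)
qed

lemma hgr_N: "2 * hgr a (b - 1) c = hgr a b c + (c - a) * hgr a b (c + 1)"
proof -
  let ?al = "\<lambda>n. hgt a b c n - hgt a (b - 1) c n"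
  let ?be = "\<lambda>n. hgt a b c n - (c - a) * hgt a b (c + 1) n"
  have sb: "summable ?be" by (intro summable_diff summable_mult summable_hgt)
  have 1: "suminf ?al = suminf ?be / 2"
    by (rule shift_half(2)[OF sb]) (simp_all add: hgt_0 hgt_N_term)
  have 2: "suminf ?al = hgr a b c - hgr a (b - 1) c"
    unfolding hgr_def by (rule suminf_diff[symmetric]) (auto intro: summable_hgt)
  have 3: "suminf ?be = hgr a b c - (c - a) * hgr a b (c + 1)"
    unfolding hgr_def by (intro suminf_lin2 summable_hgt)
  have "hgr a b c - hgr a (b - 1) c = (hgr a b c - (c - a) * hgr a b (c + 1)) / 2"
    using 1 unfolding 2 3 .
  thus ?thesis by (simp add: field_simps)
qed

lemma hgt_B_term:
  "hgt a b (c - 1) (Suc n) - (c - 1) * hgt a b c (Suc n) =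
    (hgt a b (c - 1) n - (2 * c - a - b - 1) * hgt a b c n + (c - a) * (c - b) * hgt a b (c + 1) n) / 2"
proof -
  have r1: "rGamma (c + of_nat n) = (c + of_nat n) * rGamma (c + of_nat n + 1)"
    by (rule rG1)
  have r0: "rGamma (c - 1 + of_nat n) = (c - 1 + of_nat n) * ((c + of_nat n) * rGamma (c + of_nat n + 1))"
    using rG1[of "c - 1 + of_nat n"] r1 by (simp add: add_ac)
  have e1: "hgt a b (c - 1) (Suc n) = pochhammer a n * (a + of_nat n) * (pochhammer b n * (b + of_nat n))
      * ((c + of_nat n) * rGamma (c + of_nat n + 1)) / (fact n * (of_nat n + 1)) / (2 ^ n * 2)"
    unfolding hgt_Suc_expand r1[symmetric] by (simp add: add_ac)
  have e2: "hgt a b (c + 1) n = pochhammer a n * pochhammer b n * rGamma (c + of_nat n + 1) / fact n / 2 ^ n"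
    by (simp add: hgt_def add_ac)
  have e3: "hgt a b c n = pochhammer a n * pochhammer b n * ((c + of_nat n) * rGamma (c + of_nat n + 1)) / fact n / 2 ^ n"
    by (simp add: hgt_def r1[symmetric])
  have e4: "hgt a b (c - 1) n = pochhammer a n * pochhammer b n * ((c - 1 + of_nat n) * ((c + of_nat n) * rGamma (c + of_nat n + 1))) / fact n / 2 ^ n"
    by (simp add: hgt_def r0[symmetric])
  show ?thesis
    apply (simp only: e1 e2 e3 e4)
    apply (subst hgt_Suc_expand)
    by (rule absB) (simp_all add: nz1)
qed

lemma half_aux: fixes x u y w :: complex
  shows "x - u * y = (x - 2 * u * y + w) / 2 \<Longrightarrow> x = w"
  by (simp add: field_simps)

lemma hgr_B:
  assumes "a + b = 1"
  shows "hgr a b (c - 1) = (c - a) * (c - b) * hgr a b (c + 1)"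
proof -
  let ?al = "\<lambda>n. hgt a b (c - 1) n - (c - 1) * hgt a b c n"
  let ?be = "\<lambda>n. hgt a b (c - 1) n - (2 * c - a - b - 1) * hgt a b c n + (c - a) * (c - b) * hgt a b (c + 1) n"
  have sb: "summable ?be" by (intro summable_add summable_diff summable_mult summable_hgt)
  have "rGamma (c - 1) = (c - 1) * rGamma c" using rG1[of "c - 1"] by simp
  hence 1: "suminf ?al = suminf ?be / 2"
    by (intro shift_half(2)[OF sb]) (simp_all add: hgt_0 hgt_B_term)
  have 2: "suminf ?al = hgr a b (c - 1) - (c - 1) * hgr a b c"
    unfolding hgr_def by (intro suminf_lin2 summable_hgt)
  have 3: "suminf ?be = hgr a b (c - 1) - (2 * c - a - b - 1) * hgr a b c + (c - a) * (c - b) * hgr a b (c + 1)"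
    unfolding hgr_def by (intro suminf_lin3 summable_hgt)
  have "hgr a b (c - 1) - (c - 1) * hgr a b c = (hgr a b (c - 1) - (2 * c - a - b - 1) * hgr a b c + (c - a) * (c - b) * hgr a b (c + 1)) / 2"
    using 1 unfolding 2 3 .
  moreover have "2 * c - a - b - 1 = 2 * (c - 1)" using assms by (simp add: algebra_simps)
  ultimately have "hgr a b (c - 1) - (c - 1) * hgr a b c = (hgr a b (c - 1) - 2 * (c - 1) * hgr a b c + (c - a) * (c - b) * hgr a b (c + 1)) / 2"
    by simp
  thus ?thesis by (rule half_aux)
qed



lemma Gamma_shift_rGs:
  fixes z :: complex
  assumes "z \<notin> \<int>\<^sub>\<le>\<^sub>0"
  shows "Gamma (z + of_nat (Suc n)) = rGamma_series z n * (fact n * exp (z * of_real (ln (of_nat n)))) * Gamma z"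
proof -
  have "pochhammer z (Suc n) = Gamma (z + of_nat (Suc n)) / Gamma z"
    by (rule pochhammer_Gamma[OF assms])
  moreover have "Gamma z \<noteq> 0" using assms by (simp add: Gamma_eq_zero_iff)
  moreover have "rGamma_series z n * (fact n * exp (z * of_real (ln (of_nat n)))) = pochhammer z (Suc n)"
    by (simp add: rGamma_series_def)
  ultimately show ?thesis by (simp add: field_simps)
qed

lemma Gamma_ratio_limit:
  fixes u v p q :: complex
  assumes "u \<notin> \<int>\<^sub>\<le>\<^sub>0" "v \<notin> \<int>\<^sub>\<le>\<^sub>0" "p \<notin> \<int>\<^sub>\<le>\<^sub>0" "q \<notin> \<int>\<^sub>\<le>\<^sub>0" "u + v = p + q"
  shows "(\<lambda>n. Gamma (u + of_nat n) * Gamma (v + of_nat n) * rGamma (p + of_nat n) * rGamma (q + of_nat n)) \<longlonglongrightarrow> 1"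
proof (rule LIMSEQ_offset[where k = 1])
  define E where "E = (\<lambda>z n. fact n * exp (z * of_real (ln (of_nat n))) :: complex)"
  have Enz: "E z n \<noteq> 0" for z n unfolding E_def by simp
  have Euv: "E u n * E v n = E p n * E q n" for n
    unfolding E_def using assms(5)
    by (simp add: mult_ac exp_add[symmetric] distrib_right[symmetric])
  have rGnz: "rGamma_series z n \<noteq> 0" if "z \<notin> \<int>\<^sub>\<le>\<^sub>0" for z n
    using that by (auto simp: rGamma_series_def pochhammer_eq_0_iff)
  have Gnz: "Gamma z \<noteq> 0" if "z \<notin> \<int>\<^sub>\<le>\<^sub>0" for z using that by (simp add: Gamma_eq_zero_iff)
  have lim: "(\<lambda>n. (rGamma_series u n * Gamma u) * (rGamma_series v n * Gamma v) /
        ((rGamma_series p n * Gamma p) * (rGamma_series q n * Gamma q))) \<longlonglongrightarrow>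
        (rGamma u * Gamma u) * (rGamma v * Gamma v) / ((rGamma p * Gamma p) * (rGamma q * Gamma q))"
    using assms by (intro tendsto_intros) (auto simp: rGamma_eq_zero_iff Gamma_eq_zero_iff)
  have one: "rGamma z * Gamma z = 1" if "z \<notin> \<int>\<^sub>\<le>\<^sub>0" for z
    using that by (simp add: rGamma_inverse_Gamma Gamma_eq_zero_iff)
  have eq: "(rGamma_series u n * Gamma u) * (rGamma_series v n * Gamma v) /
        ((rGamma_series p n * Gamma p) * (rGamma_series q n * Gamma q)) =
      Gamma (u + of_nat (n + 1)) * Gamma (v + of_nat (n + 1)) * rGamma (p + of_nat (n + 1)) * rGamma (q + of_nat (n + 1))" for n
  proof -
    have "Gamma (u + of_nat (n + 1)) * Gamma (v + of_nat (n + 1)) * rGamma (p + of_nat (n + 1)) * rGamma (q + of_nat (n + 1))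
      = (rGamma_series u n * E u n * Gamma u) * (rGamma_series v n * E v n * Gamma v) /
        ((rGamma_series p n * E p n * Gamma p) * (rGamma_series q n * E q n * Gamma q))"
      using Gamma_shift_rGs[OF assms(1), of n] Gamma_shift_rGs[OF assms(2), of n]
            Gamma_shift_rGs[OF assms(3), of n] Gamma_shift_rGs[OF assms(4), of n]
      by (simp add: rGamma_inverse_Gamma E_def divide_inverse mult_ac)
    also have "\<dots> = (rGamma_series u n * Gamma u) * (rGamma_series v n * Gamma v) /
        ((rGamma_series p n * Gamma p) * (rGamma_series q n * Gamma q)) * ((E u n * E v n) / (E p n * E q n))"
      by (simp add: field_simps)
    also have "(E u n * E v n) / (E p n * E q n) = 1" using Euv[of n] Enz by simp
    finally show ?thesis by simp
  qed
  show "(\<lambda>n. Gamma (u + of_nat (n + 1)) * Gamma (v + of_nat (n + 1)) * rGamma (p + of_nat (n + 1)) * rGamma (q + of_nat (n + 1))) \<longlonglongrightarrow> 1"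
    using lim unfolding eq one[OF assms(1)] one[OF assms(2)] one[OF assms(3)] one[OF assms(4)] by simp
qed



definition fst_t :: "complex \<Rightarrow> complex \<Rightarrow> complex \<Rightarrow> nat \<Rightarrow> complex" where
  "fst_t a b y n = pochhammer a n * pochhammer b n / (pochhammer y n * fact n * 2 ^ n)"

definition Fs :: "complex \<Rightarrow> complex \<Rightarrow> complex \<Rightarrow> complex" where
  "Fs a b y = (\<Sum>n. fst_t a b y n)"

lemma Re_pos_not_nonpos: "0 < Re (y::complex) \<Longrightarrow> y \<notin> \<int>\<^sub>\<le>\<^sub>0"
  by (auto elim!: nonpos_Ints_cases)

lemma hgt_fst:
  assumes "y \<notin> \<int>\<^sub>\<le>\<^sub>0"
  shows "hgt a b y n = rGamma y * fst_t a b y n"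
proof -
  have "pochhammer y n \<noteq> 0" using assms
    by (auto simp: pochhammer_eq_0_iff)
  moreover have "rGamma y = pochhammer y n * rGamma (y + of_nat n)" by (rule pochhammer_rGamma)
  ultimately show ?thesis unfolding hgt_def fst_t_def by (simp add: field_simps)
qed

lemma summable_fst:
  assumes "y \<notin> \<int>\<^sub>\<le>\<^sub>0"
  shows "summable (fst_t a b y)"
proof -
  have nz: "rGamma y \<noteq> 0" using assms by (simp add: rGamma_eq_zero_iff)
  have "summable (\<lambda>n. hgt a b y n / rGamma y)" by (intro summable_divide summable_hgt)
  also have "(\<lambda>n. hgt a b y n / rGamma y) = fst_t a b y" using nz by (auto simp: hgt_fst[OF assms])
  finally show ?thesis .
qed

lemma hgr_Fs:
  assumes "y \<notin> \<int>\<^sub>\<le>\<^sub>0"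
  shows "hgr a b y = rGamma y * Fs a b y"
  unfolding hgr_def Fs_def hgt_fst[OF assms]
  by (rule suminf_mult[OF summable_fst[OF assms]])

lemma poch_nonneg: "0 \<le> (x::real) \<Longrightarrow> 0 \<le> pochhammer x n"
  by (induction n) (auto simp: pochhammer_Suc)

lemma poch_mono: "0 \<le> (x::real) \<Longrightarrow> x \<le> y \<Longrightarrow> pochhammer x n \<le> pochhammer y n"
  by (induction n) (auto simp: pochhammer_Suc intro!: mult_mono poch_nonneg)

lemma norm_1_nat: "norm (1 + of_nat n :: complex) = 1 + real n"
  using norm_of_nat[of "Suc n", where 'a=complex] by simp

lemma norm_poch_le: "norm (pochhammer (z::complex) n) \<le> pochhammer (norm z) n"
proof (induction n)
  case (Suc n)
  have "norm (pochhammer z (Suc n)) = norm (pochhammer z n) * norm (z + of_nat n)"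
    by (simp add: pochhammer_Suc norm_mult)
  also have "\<dots> \<le> pochhammer (norm z) n * (norm z + of_nat n)"
    using Suc norm_triangle_ineq[of z "of_nat n"]
    by (intro mult_mono) (auto simp: poch_nonneg)
  finally show ?case by (simp add: pochhammer_Suc)
qed simp

lemma norm_poch_ge: "0 \<le> Re y \<Longrightarrow> pochhammer (Re y) n \<le> norm (pochhammer (y::complex) n)"
proof (induction n)
  case (Suc n)
  have "pochhammer (Re y) (Suc n) = pochhammer (Re y) n * (Re y + of_nat n)"
    by (simp add: pochhammer_Suc)
  also have "\<dots> \<le> norm (pochhammer y n) * norm (y + of_nat n)"
    using Suc complex_Re_le_cmod[of "y + of_nat n"]
    by (intro mult_mono) auto
  finally show ?case by (simp add: pochhammer_Suc norm_mult)
qed simp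

lemma poch_ratio:
  fixes M Y :: real
  assumes "0 < M" "M \<le> Y"
  shows "pochhammer M (Suc n) / pochhammer Y (Suc n) \<le> M / Y"
proof (induction n)
  case 0 thus ?case by simp
next
  case (Suc n)
  have Ypos: "0 < pochhammer Y (Suc n)" using assms by (intro pochhammer_pos) auto
  have "pochhammer M (Suc (Suc n)) / pochhammer Y (Suc (Suc n)) =
        (pochhammer M (Suc n) / pochhammer Y (Suc n)) * ((M + of_nat (Suc n)) / (Y + of_nat (Suc n)))"
    by (simp add: pochhammer_Suc[of _ "Suc n"])
  also have "\<dots> \<le> (M / Y) * 1"
    using Suc assms by (intro mult_mono) (auto intro!: divide_nonneg_nonneg poch_nonneg)
  finally show ?case by simp
qed

definition Cn :: "real \<Rightarrow> nat \<Rightarrow> real" where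
  "Cn M n = pochhammer M n / (fact n * 2 ^ n)"

lemma summable_Cn:
  assumes "0 \<le> M" shows "summable (Cn M)"
proof (rule ratio_summable)
  show "(\<lambda>n. (M + of_nat n) / (1 + of_nat n) / 2) \<longlonglongrightarrow> 1 / 2"
    using tendsto_divide[OF ratio_to_one[of M 1] tendsto_const[of 2]] by simp
  show "(1 / 2 :: real) < 1" by simp
  show "\<forall>\<^sub>F n in sequentially. norm (Cn M (Suc n)) \<le> (M + of_nat n) / (1 + of_nat n) / 2 * norm (Cn M n)"
  proof (intro always_eventually allI)
    fix n
    have "Cn M (Suc n) = (M + of_nat n) / (1 + of_nat n) / 2 * Cn M n"
      by (simp add: Cn_def pochhammer_Suc field_simps)
    moreover have "0 \<le> Cn M n" using assms by (simp add: Cn_def poch_nonneg[OF assms])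
    moreover have "0 \<le> (M + of_nat n) / (1 + of_nat n) / 2" using assms by simp
    ultimately show "norm (Cn M (Suc n)) \<le> (M + of_nat n) / (1 + of_nat n) / 2 * norm (Cn M n)"
      by (simp only: real_norm_def abs_mult abs_of_nonneg)
  qed
qed

lemma Fs_bound:
  assumes M: "M = norm a + norm b + 1" and MY: "M \<le> Re y"
  shows "norm (Fs a b y - 1) \<le> M / Re y * suminf (Cn M)"
proof -
  have Mpos: "0 < M" using M by (simp add: add_nonneg_pos)
  have Ypos: "0 < Re y" using Mpos MY by linarith
  have ny: "y \<notin> \<int>\<^sub>\<le>\<^sub>0" using Ypos by (rule Re_pos_not_nonpos)
  have sC: "summable (Cn M)" using Mpos by (intro summable_Cn) simp
  have sC': "summable (\<lambda>n. M / Re y * Cn M (Suc n))"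
    using sC by (intro summable_mult) (simp add: summable_Suc_iff)
  have "Fs a b y - 1 = (\<Sum>n. fst_t a b y (Suc n))"
    unfolding Fs_def using suminf_split_head[OF summable_fst[OF ny], of a b]
    by (simp add: fst_t_def)
  also have "norm \<dots> \<le> (\<Sum>n. M / Re y * Cn M (Suc n))"
  proof (rule norm_suminf_le[OF _ sC'])
    fix n
    let ?k = "Suc n"
    have pY: "0 < pochhammer (Re y) ?k" using Ypos by (intro pochhammer_pos)
    have "norm (fst_t a b y ?k) = norm (pochhammer a ?k) * norm (pochhammer b ?k) / (norm (pochhammer y ?k) * (fact ?k * 2 ^ ?k))"
      by (simp add: fst_t_def norm_mult norm_divide norm_power norm_1_nat)
    also have "\<dots> \<le> pochhammer M ?k * pochhammer M ?k / (pochhammer (Re y) ?k * (fact ?k * 2 ^ ?k))"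
    proof (intro frac_le mult_mono mult_pos_pos)
      have "norm (pochhammer a ?k) \<le> pochhammer (norm a) ?k" by (rule norm_poch_le)
      also have "\<dots> \<le> pochhammer M ?k" using M by (intro poch_mono) auto
      finally show "norm (pochhammer a ?k) \<le> pochhammer M ?k" .
      have "norm (pochhammer b ?k) \<le> pochhammer (norm b) ?k" by (rule norm_poch_le)
      also have "\<dots> \<le> pochhammer M ?k" using M by (intro poch_mono) auto
      finally show "norm (pochhammer b ?k) \<le> pochhammer M ?k" .
      show "pochhammer (Re y) ?k \<le> norm (pochhammer y ?k)" using Ypos by (intro norm_poch_ge) simp
    qed (use pY Mpos in \<open>auto intro: poch_nonneg\<close>)
    also have "\<dots> = (pochhammer M ?k / pochhammer (Re y) ?k) * Cn M ?k"
      by (simp add: Cn_def)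
    also have "\<dots> \<le> M / Re y * Cn M ?k"
      using poch_ratio[OF Mpos MY, of n] Mpos by (intro mult_right_mono) (auto simp: Cn_def poch_nonneg)
    finally show "norm (fst_t a b y ?k) \<le> M / Re y * Cn M ?k" .
  qed
  also have "\<dots> = M / Re y * (\<Sum>n. Cn M (Suc n))"
    using sC by (intro suminf_mult) (simp add: summable_Suc_iff)
  also have "\<dots> \<le> M / Re y * suminf (Cn M)"
    using suminf_split_head[OF sC] Mpos Ypos by (intro mult_left_mono) (auto simp: Cn_def)
  finally show ?thesis .
qed



definition Psi :: "complex \<Rightarrow> complex \<Rightarrow> complex" where
  "Psi s x = of_real (sqrt pi) * exp ((1 - x) * of_real (ln 2)) * rGamma ((x + 1 - s) / 2) * rGamma ((x + s) / 2)"

lemma exp_2ln2: "exp (2 * of_real (ln 2) :: complex) = 4"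
proof -
  have "exp (2 * of_real (ln 2) :: complex) = of_real (exp (2 * ln 2))"
    by (simp add: exp_of_real[symmetric])
  also have "exp (2 * ln 2 :: real) = exp (ln 2) * exp (ln 2)"
  proof -
    have "(2::real) * ln 2 = ln 2 + ln 2" by simp
    thus ?thesis by (simp only: exp_add)
  qed
  also have "\<dots> = 4" by simp
  finally show ?thesis by simp
qed

lemma Psi_rec: "Psi s x = (x + 1 - s) * (x + s) * Psi s (x + 2)"
proof -
  have r1: "rGamma ((x + 1 - s) / 2) = ((x + 1 - s) / 2) * rGamma ((x + 2 + 1 - s) / 2)"
    using rG1[of "(x + 1 - s) / 2"] by (simp add: field_simps)
  have r2: "rGamma ((x + s) / 2) = ((x + s) / 2) * rGamma ((x + 2 + s) / 2)"
    using rG1[of "(x + s) / 2"] by (simp add: field_simps)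
  have e: "exp ((1 - x) * of_real (ln 2)) = 4 * exp ((1 - (x + 2)) * of_real (ln 2))"
  proof -
    have "(1 - x) * of_real (ln 2) = 2 * of_real (ln 2) + (1 - (x + 2)) * (of_real (ln 2) :: complex)"
      by (simp add: algebra_simps)
    thus ?thesis by (simp add: exp_add exp_2ln2)
  qed
  show ?thesis unfolding Psi_def r1 r2 e by (simp add: field_simps)
qed

lemma hgr_rec: "hgr s (1 - s) x = (x + 1 - s) * (x + s) * hgr s (1 - s) (x + 2)"
  using hgr_B[of s "1 - s" "x + 1"] by (simp add: algebra_simps)

definition PK :: "complex \<Rightarrow> nat \<Rightarrow> complex \<Rightarrow> complex" where
  "PK s K x = (\<Prod>k<K. (x + 2 * of_nat k + 1 - s) * (x + 2 * of_nat k + s))"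

lemma iter_rec:
  assumes "\<And>x. f x = (x + 1 - s) * (x + s) * f (x + 2)"
  shows "f x = PK s K x * f (x + 2 * of_nat K)"
proof (induction K)
  case 0 thus ?case by (simp add: PK_def)
next
  case (Suc K)
  have "f (x + 2 * of_nat K) = (x + 2 * of_nat K + 1 - s) * (x + 2 * of_nat K + s) * f (x + 2 * of_nat K + 2)"
    by (rule assms)
  moreover have "PK s (Suc K) x = PK s K x * ((x + 2 * of_nat K + 1 - s) * (x + 2 * of_nat K + s))"
    by (simp add: PK_def)
  moreover have "x + 2 * of_nat (Suc K) = x + 2 * of_nat K + 2" by simp
  ultimately show ?case using Suc by (simp only: mult.assoc)
qed

lemma dup_y:
  assumes "0 < Re y"
  shows "of_real (sqrt pi) * exp ((1 - y) * of_real (ln 2)) = Gamma (y / 2) * Gamma ((y + 1) / 2) * rGamma y"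
proof -
  have a: "y / 2 \<notin> \<int>\<^sub>\<le>\<^sub>0" "y / 2 + 1 / 2 \<notin> \<int>\<^sub>\<le>\<^sub>0" "y \<notin> \<int>\<^sub>\<le>\<^sub>0"
    using assms by (auto intro!: Re_pos_not_nonpos)
  have "Gamma (y / 2) * Gamma (y / 2 + 1 / 2) = exp ((1 - 2 * (y / 2)) * of_real (ln 2)) * of_real (sqrt pi) * Gamma (2 * (y / 2))"
    by (rule Gamma_legendre_duplication[OF a(1,2)])
  moreover have "y / 2 + 1 / 2 = (y + 1) / 2" by (simp add: field_simps)
  moreover have "Gamma y \<noteq> 0" using a(3) by (simp add: Gamma_eq_zero_iff)
  ultimately show ?thesis by (simp add: rGamma_inverse_Gamma field_simps)
qed

definition Rr :: "complex \<Rightarrow> complex \<Rightarrow> complex" where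
  "Rr s y = Gamma (y / 2) * Gamma ((y + 1) / 2) * rGamma ((y + 1 - s) / 2) * rGamma ((y + s) / 2)"

lemma Psi_Rr: "0 < Re y \<Longrightarrow> Psi s y = rGamma y * Rr s y"
  unfolding Psi_def Rr_def using dup_y[of y] by (simp add: mult_ac)

lemma Rr_limit: "(\<lambda>K. Rr s (x + 2 * of_nat K)) \<longlonglongrightarrow> 1"
proof -
  obtain K0 :: nat where K0: "real K0 > norm x + norm s + 1" using reals_Archimedean2 by blast
  define u where "u = x / 2 + of_nat K0"
  define v where "v = (x + 1) / 2 + of_nat K0"
  define p where "p = (x + 1 - s) / 2 + of_nat K0"
  define q where "q = (x + s) / 2 + of_nat K0"
  have reb: "\<bar>Re z\<bar> \<le> norm z" for z :: complex by (rule abs_Re_le_cmod)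
  have rx: "- norm x \<le> Re x" and rs: "- norm s \<le> Re s" "Re s \<le> norm s"
    using reb[of x] reb[of s] by (auto simp: abs_le_iff)
  have "Re u = Re x / 2 + real K0" "Re v = (Re x + 1) / 2 + real K0"
       "Re p = (Re x + 1 - Re s) / 2 + real K0" "Re q = (Re x + Re s) / 2 + real K0"
    unfolding u_def v_def p_def q_def by simp_all
  note e = this
  have "0 < Re u" using e(1) K0 rx rs norm_ge_zero[of x] norm_ge_zero[of s] by linarith
  moreover have "0 < Re v" unfolding e(2) using K0 rx rs norm_ge_zero[of x] norm_ge_zero[of s] by (simp add: field_simps)
  moreover have "0 < Re p" unfolding e(3) using K0 rx rs norm_ge_zero[of x] norm_ge_zero[of s] by (simp add: field_simps)
  moreover have "0 < Re q" unfolding e(4) using K0 rx rs norm_ge_zero[of x] norm_ge_zero[of s] by (simp add: field_simps)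
  ultimately have nz: "u \<notin> \<int>\<^sub>\<le>\<^sub>0" "v \<notin> \<int>\<^sub>\<le>\<^sub>0" "p \<notin> \<int>\<^sub>\<le>\<^sub>0" "q \<notin> \<int>\<^sub>\<le>\<^sub>0"
    by (auto intro!: Re_pos_not_nonpos)
  have "u + v = p + q" unfolding u_def v_def p_def q_def by (simp add: field_simps)
  from Gamma_ratio_limit[OF nz this]
  have "(\<lambda>K. Rr s (x + 2 * of_nat (K + K0))) \<longlonglongrightarrow> 1"
  proof (rule Lim_transform_eventually, intro always_eventually allI)
    fix K
    have e: "(x + 2 * of_nat (K + K0)) / 2 = u + of_nat K"
            "(x + 2 * of_nat (K + K0) + 1) / 2 = v + of_nat K"
            "(x + 2 * of_nat (K + K0) + 1 - s) / 2 = p + of_nat K"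
            "(x + 2 * of_nat (K + K0) + s) / 2 = q + of_nat K"
      unfolding u_def v_def p_def q_def by (simp_all add: field_simps)
    show "Gamma (u + of_nat K) * Gamma (v + of_nat K) * rGamma (p + of_nat K) * rGamma (q + of_nat K) = Rr s (x + 2 * of_nat (K + K0))"
      unfolding Rr_def e ..
  qed
  thus ?thesis by (rule LIMSEQ_offset)
qed

lemma Fs_limit: "(\<lambda>K. Fs a b (x + 2 * of_nat K)) \<longlonglongrightarrow> 1"
proof -
  define M where "M = norm a + norm b + 1"
  define C where "C = suminf (Cn M)"
  have fl: "filterlim (\<lambda>K. Re x + 2 * real K) at_top sequentially"
    by (intro filterlim_tendsto_add_at_top[OF tendsto_const] filterlim_tendsto_pos_mult_at_top[OF tendsto_const]
          filterlim_real_sequentially) simp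
  have g0: "(\<lambda>K. M / (Re x + 2 * real K) * C) \<longlonglongrightarrow> 0"
    using tendsto_mult[OF tendsto_divide_0[OF tendsto_const filterlim_at_top_imp_at_infinity[OF fl], of M] tendsto_const[of C]]
    by simp
  have ev: "eventually (\<lambda>K. M \<le> Re x + 2 * real K) sequentially"
    using fl by (simp add: filterlim_at_top)
  have "(\<lambda>K. Fs a b (x + 2 * of_nat K) - 1) \<longlonglongrightarrow> 0"
  proof (rule Lim_null_comparison[OF _ g0])
    show "eventually (\<lambda>K. norm (Fs a b (x + 2 * of_nat K) - 1) \<le> M / (Re x + 2 * real K) * C) sequentially"
      using ev
    proof eventually_elim
      case (elim K)
      have "Re (x + 2 * of_nat K) = Re x + 2 * real K" by simp
      with Fs_bound[OF M_def, of "x + 2 * of_nat K"] elim show ?case by (simp add: C_def)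
    qed
  qed
  thus ?thesis using Lim_transform[OF tendsto_const[of 1]] by (metis (no_types) tendsto_add_const_iff add.commute diff_add_cancel add_0)
qed

theorem bailey: "hgr s (1 - s) x = Psi s x"
proof -
  define D where "D = (\<lambda>x. hgr s (1 - s) x - Psi s x)"
  have Drec: "D x = (x + 1 - s) * (x + s) * D (x + 2)" for x
  proof -
    have h: "hgr s (1 - s) x = (x + 1 - s) * (x + s) * hgr s (1 - s) (x + 2)" by (rule hgr_rec)
    have p: "Psi s x = (x + 1 - s) * (x + s) * Psi s (x + 2)" by (rule Psi_rec)
    show ?thesis unfolding D_def h p by (simp only: right_diff_distrib)
  qed
  have Psirec: "Psi s x = (x + 1 - s) * (x + s) * Psi s (x + 2)" for x by (rule Psi_rec)
  have ev: "eventually (\<lambda>K. 0 < Re (x + 2 * of_nat K)) sequentially"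
  proof -
    obtain K0 :: nat where "real K0 > norm x" using reals_Archimedean2 by blast
    hence "\<forall>K\<ge>K0. 0 < Re (x + 2 * of_nat K)" using abs_Re_le_cmod[of x] by auto
    thus ?thesis by (auto simp: eventually_sequentially)
  qed
  have eq: "eventually (\<lambda>K. D x * Rr s (x + 2 * of_nat K) = Psi s x * (Fs s (1 - s) (x + 2 * of_nat K) - Rr s (x + 2 * of_nat K))) sequentially"
    using ev
  proof eventually_elim
    case (elim K)
    let ?y = "x + 2 * of_nat K"
    have ny: "?y \<notin> \<int>\<^sub>\<le>\<^sub>0" using elim by (rule Re_pos_not_nonpos)
    have d: "D x = PK s K x * D ?y" by (rule iter_rec[OF Drec])
    have p: "Psi s x = PK s K x * Psi s ?y" by (rule iter_rec[OF Psirec])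
    have "D ?y = rGamma ?y * (Fs s (1 - s) ?y - Rr s ?y)"
      unfolding D_def hgr_Fs[OF ny] Psi_Rr[OF elim] by (simp add: algebra_simps)
    note dy = this
    show ?case unfolding d p Psi_Rr[OF elim] dy by (simp add: algebra_simps)
  qed
  have l1: "(\<lambda>K. D x * Rr s (x + 2 * of_nat K)) \<longlonglongrightarrow> D x * 1"
    by (intro tendsto_intros Rr_limit)
  have l2: "(\<lambda>K. Psi s x * (Fs s (1 - s) (x + 2 * of_nat K) - Rr s (x + 2 * of_nat K))) \<longlonglongrightarrow> Psi s x * (1 - 1)"
    by (intro tendsto_intros Rr_limit Fs_limit)
  have "(\<lambda>K. D x * Rr s (x + 2 * of_nat K)) \<longlonglongrightarrow> Psi s x * (1 - 1)"
  proof (rule Lim_transform_eventually[OF l2])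
    show "eventually (\<lambda>K. Psi s x * (Fs s (1 - s) (x + 2 * of_nat K) - Rr s (x + 2 * of_nat K)) = D x * Rr s (x + 2 * of_nat K)) sequentially"
      using eq by (rule eventually_mono) (rule sym)
  qed
  with l1 have "D x * 1 = Psi s x * (1 - 1)" using LIMSEQ_unique by blast
  thus ?thesis by (simp add: D_def)
qed



lemma pascal_sum:
  fixes f :: "nat \<Rightarrow> complex"
  shows "(\<Sum>r\<le>Suc i. of_nat (Suc i choose r) * f r) = (\<Sum>r\<le>i. of_nat (i choose r) * f r) + (\<Sum>r\<le>i. of_nat (i choose r) * f (Suc r))"
proof -
  have "(\<Sum>r\<le>Suc i. of_nat (Suc i choose r) * f r) = f 0 + (\<Sum>r\<le>i. of_nat (Suc i choose Suc r) * f (Suc r))"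
    by (subst sum.atMost_Suc_shift) simp
  also have "\<dots> = f 0 + (\<Sum>r\<le>i. of_nat (i choose Suc r) * f (Suc r)) + (\<Sum>r\<le>i. of_nat (i choose r) * f (Suc r))"
    by (simp add: sum.distrib algebra_simps)
  also have "f 0 + (\<Sum>r\<le>i. of_nat (i choose Suc r) * f (Suc r)) = (\<Sum>r\<le>Suc i. of_nat (i choose r) * f r)"
    by (subst sum.atMost_Suc_shift) simp
  also have "\<dots> = (\<Sum>r\<le>i. of_nat (i choose r) * f r)"
    by simp
  finally show ?thesis .
qed

definition Tpos :: "complex \<Rightarrow> nat \<Rightarrow> complex \<Rightarrow> complex" where
  "Tpos s i c = (\<Sum>r\<le>i. of_nat (i choose r) * ((-1) ^ (i + r) * pochhammer (c - s - of_nat i) (i - r) * Psi s (c - of_nat r)))"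

theorem pos_family: "pochhammer s i * hgr (s + of_nat i) (1 - s) c = Tpos s i c"
proof (induction i arbitrary: c)
  case 0
  show ?case by (simp add: Tpos_def bailey)
next
  case (Suc i)
  have P: "(s + of_nat i) * hgr (s + of_nat i + 1) (1 - s) c =
      hgr (s + of_nat i) (1 - s) (c - 1) - (c - (s + of_nat i) - 1) * hgr (s + of_nat i) (1 - s) c"
    by (rule hgr_P)
  have "pochhammer s (Suc i) * hgr (s + of_nat (Suc i)) (1 - s) c =
        pochhammer s i * ((s + of_nat i) * hgr (s + of_nat i + 1) (1 - s) c)"
    by (simp add: pochhammer_Suc add_ac mult_ac)
  also have "\<dots> = pochhammer s i * hgr (s + of_nat i) (1 - s) (c - 1) - (c - s - of_nat i - 1) * (pochhammer s i * hgr (s + of_nat i) (1 - s) c)"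
    unfolding P by (simp add: algebra_simps)
  also have "\<dots> = Tpos s i (c - 1) - (c - s - of_nat i - 1) * Tpos s i c"
    unfolding Suc.IH ..
  also have "\<dots> = Tpos s (Suc i) c"
  proof -
    define g where "g = (\<lambda>r. (-1) ^ (Suc i + r) * pochhammer (c - s - of_nat (Suc i)) (Suc i - r) * Psi s (c - of_nat r))"
    have "Tpos s (Suc i) c = (\<Sum>r\<le>Suc i. of_nat (Suc i choose r) * g r)"
      unfolding Tpos_def g_def ..
    also have "\<dots> = (\<Sum>r\<le>i. of_nat (i choose r) * g r) + (\<Sum>r\<le>i. of_nat (i choose r) * g (Suc r))"
      by (rule pascal_sum)
    also have "(\<Sum>r\<le>i. of_nat (i choose r) * g r) = - (c - s - of_nat i - 1) * Tpos s i c"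
      unfolding Tpos_def sum_distrib_left
    proof (rule sum.cong[OF refl])
      fix r assume "r \<in> {..i}"
      hence ri: "Suc i - r = Suc (i - r)" by auto
      show "of_nat (i choose r) * g r = - (c - s - of_nat i - 1) * (of_nat (i choose r) * ((-1) ^ (i + r) * pochhammer (c - s - of_nat i) (i - r) * Psi s (c - of_nat r)))"
        unfolding g_def ri pochhammer_rec by (simp add: algebra_simps)
    qed
    also have "(\<Sum>r\<le>i. of_nat (i choose r) * g (Suc r)) = Tpos s i (c - 1)"
      unfolding Tpos_def
    proof (rule sum.cong[OF refl])
      fix r assume "r \<in> {..i}"
      show "of_nat (i choose r) * g (Suc r) = of_nat (i choose r) * ((-1) ^ (i + r) * pochhammer (c - 1 - s - of_nat i) (i - r) * Psi s (c - 1 - of_nat r))"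
        unfolding g_def by (simp add: algebra_simps)
    qed
    finally show ?thesis by (simp add: algebra_simps)
  qed
  finally show ?case .
qed

definition Tneg :: "complex \<Rightarrow> nat \<Rightarrow> complex \<Rightarrow> complex" where
  "Tneg a j c = (\<Sum>r\<le>j. of_nat (j choose r) * (pochhammer (c - a) r * Psi a (c + of_nat r)))"

theorem neg_family: "2 ^ j * hgr a (1 - a - of_nat j) c = Tneg a j c"
proof (induction j arbitrary: c)
  case 0
  show ?case by (simp add: Tneg_def bailey)
next
  case (Suc j)
  have N: "2 * hgr a (1 - a - of_nat j - 1) c = hgr a (1 - a - of_nat j) c + (c - a) * hgr a (1 - a - of_nat j) (c + 1)"
    by (rule hgr_N)
  have "2 ^ Suc j * hgr a (1 - a - of_nat (Suc j)) c = 2 ^ j * (2 * hgr a (1 - a - of_nat j - 1) c)"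
    by (simp add: algebra_simps)
  also have "\<dots> = 2 ^ j * hgr a (1 - a - of_nat j) c + (c - a) * (2 ^ j * hgr a (1 - a - of_nat j) (c + 1))"
    unfolding N by (simp add: algebra_simps)
  also have "\<dots> = Tneg a j c + (c - a) * Tneg a j (c + 1)"
    unfolding Suc.IH ..
  also have "\<dots> = Tneg a (Suc j) c"
  proof -
    define g where "g = (\<lambda>r. pochhammer (c - a) r * Psi a (c + of_nat r))"
    have "Tneg a (Suc j) c = (\<Sum>r\<le>Suc j. of_nat (Suc j choose r) * g r)"
      unfolding Tneg_def g_def ..
    also have "\<dots> = (\<Sum>r\<le>j. of_nat (j choose r) * g r) + (\<Sum>r\<le>j. of_nat (j choose r) * g (Suc r))"
      by (rule pascal_sum)
    also have "(\<Sum>r\<le>j. of_nat (j choose r) * g r) = Tneg a j c"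
      unfolding Tneg_def g_def ..
    also have "(\<Sum>r\<le>j. of_nat (j choose r) * g (Suc r)) = (c - a) * Tneg a j (c + 1)"
      unfolding Tneg_def sum_distrib_left
    proof (rule sum.cong[OF refl])
      fix r assume "r \<in> {..j}"
      show "of_nat (j choose r) * g (Suc r) = (c - a) * (of_nat (j choose r) * (pochhammer (c + 1 - a) r * Psi a (c + 1 + of_nat r)))"
        unfolding g_def pochhammer_rec by (simp add: algebra_simps)
    qed
    finally show ?thesis by simp
  qed
  finally show ?case .
qed



lemma wz_poly:
  fixes A B C ep m n :: complex
  assumes C: "C = A + B + ep"
  shows "(m + n + 1) * (m + n + C) * (ep + m) - (m + n + C - A) * (m + n + C - B) * (m + 1)
     = - ((A + n) * (B + n) * (m + 1)) + (ep + m) * (n * (C + n - 1))"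
  unfolding C by (simp add: algebra_simps)

lemma wz_rat:
  fixes A B C ep m n E X F1 :: complex
  assumes C: "C = A + B + ep" and m: "m + 1 \<noteq> 0" and F1: "F1 = E * (ep + m) / (m + 1)"
  shows "(m + n + 1) * (m + n + C) * F1 * X - (m + n + C - A) * (m + n + C - B) * E * X
    = - (E * X * ((A + n) * (B + n))) + F1 * X * (n * (C + n - 1))"
proof -
  have "((m + n + 1) * (m + n + C) * F1 * X - (m + n + C - A) * (m + n + C - B) * E * X) * (m + 1)
      = E * X * ((m + n + 1) * (m + n + C) * (ep + m) - (m + n + C - A) * (m + n + C - B) * (m + 1))"
    unfolding F1 using m by (simp add: field_simps)
  also have "\<dots> = E * X * (- ((A + n) * (B + n) * (m + 1)) + (ep + m) * (n * (C + n - 1)))"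
    unfolding wz_poly[OF C] ..
  also have "\<dots> = (- (E * X * ((A + n) * (B + n))) + F1 * X * (n * (C + n - 1))) * (m + 1)"
    unfolding F1 using m by (simp add: field_simps)
  finally show ?thesis using m by simp
qed

definition ee :: "complex \<Rightarrow> nat \<Rightarrow> complex" where
  "ee ep m = pochhammer ep m / fact m"

definition aa :: "complex \<Rightarrow> complex \<Rightarrow> complex \<Rightarrow> nat \<Rightarrow> complex" where
  "aa A B C n = pochhammer A n * pochhammer B n / (pochhammer C n * fact n)"

definition tt :: "complex \<Rightarrow> complex \<Rightarrow> complex \<Rightarrow> complex \<Rightarrow> nat \<Rightarrow> complex" where
  "tt ep A B C N = (\<Sum>n\<le>N. ee ep (N - n) * aa A B C n)"

lemma nz1': "(of_nat n + 1 :: complex) \<noteq> 0"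
  by (metis of_nat_Suc of_nat_eq_0_iff nat.distinct(1) add.commute)

lemma abs_ee: fixes P a F k :: complex shows "F \<noteq> 0 \<Longrightarrow> k \<noteq> 0 \<Longrightarrow> P * a / (F * k) = P / F * a / k"
  by (simp add: field_simps)

lemma abs_aa: fixes P Q R F a b c k :: complex
  shows "R \<noteq> 0 \<Longrightarrow> F \<noteq> 0 \<Longrightarrow> c \<noteq> 0 \<Longrightarrow> k \<noteq> 0 \<Longrightarrow>
    (P * a * (Q * b)) / ((R * c) * (F * k)) * (c * k) = P * Q / (R * F) * (a * b)"
  by (simp add: field_simps)

lemma ee_Suc: "ee ep (Suc m) = ee ep m * (ep + of_nat m) / (of_nat m + 1)"
  unfolding ee_def pochhammer_Suc fact_Suc
  using abs_ee[of "fact m" "of_nat m + 1" "pochhammer ep m" "ep + of_nat m"] nz1'[of m]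
  by (simp add: add.commute mult.commute)

lemma ee_0: "ee ep 0 = 1" by (simp add: ee_def)
lemma aa_0: "aa A B C 0 = 1" by (simp add: aa_def)

lemma aa_Suc:
  assumes "\<And>k. C + of_nat k \<noteq> 0"
  shows "aa A B C (Suc n) * ((C + of_nat n) * (of_nat n + 1)) = aa A B C n * ((A + of_nat n) * (B + of_nat n))"
proof -
  have pc: "pochhammer C n \<noteq> 0" using assms by (auto simp: pochhammer_eq_0_iff eq_neg_iff_add_eq_0)
  show ?thesis unfolding aa_def pochhammer_Suc fact_Suc
    using abs_aa[OF pc _ assms[of n] nz1'[of n], of "fact n" "pochhammer A n" "A + of_nat n" "pochhammer B n" "B + of_nat n"]
    by (simp add: add.commute mult.commute)
qed

lemma wz_step:
  assumes C: "C = A + B + ep" and nzC: "\<And>k. C + of_nat k \<noteq> 0" and nN: "n \<le> N"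
  defines "G \<equiv> \<lambda>n. - (ee ep (Suc N - n) * aa A B C n * (of_nat n * (C + of_nat n - 1)))"
  shows "(of_nat N + 1) * (of_nat N + C) * ee ep (Suc N - n) * aa A B C n
          - (of_nat N + C - A) * (of_nat N + C - B) * ee ep (N - n) * aa A B C n = G (Suc n) - G n"
proof -
  define m where "m = N - n"
  have N: "N = m + n" and SN: "Suc N - n = Suc m" and SN2: "Suc N - Suc n = m" using nN by (auto simp: m_def)
  have Gs: "G (Suc n) = - (ee ep m * aa A B C n * ((A + of_nat n) * (B + of_nat n)))"
  proof -
    have e: "of_nat (Suc n) * (C + of_nat (Suc n) - 1) = (C + of_nat n) * (of_nat n + 1 :: complex)"
      by (simp add: algebra_simps)
    have "G (Suc n) = - (ee ep m * (aa A B C (Suc n) * ((C + of_nat n) * (of_nat n + 1))))"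
      unfolding G_def SN2 e[symmetric] by (simp only: mult.assoc)
    thus ?thesis unfolding aa_Suc[OF nzC] by (simp only: mult.assoc)
  qed
  have Gn: "G n = - (ee ep (Suc m) * aa A B C n * (of_nat n * (C + of_nat n - 1)))"
    unfolding G_def SN ..
  have "(of_nat m + of_nat n + 1) * (of_nat m + of_nat n + C) * ee ep (Suc m) * aa A B C n
      - (of_nat m + of_nat n + C - A) * (of_nat m + of_nat n + C - B) * ee ep m * aa A B C n
      = - (ee ep m * aa A B C n * ((A + of_nat n) * (B + of_nat n))) + ee ep (Suc m) * aa A B C n * (of_nat n * (C + of_nat n - 1))"
    by (rule wz_rat[OF C nz1' ee_Suc])
  thus ?thesis unfolding Gs Gn N SN by (simp add: algebra_simps)
qed

lemma tt_rec:
  assumes C: "C = A + B + ep" and nzC: "\<And>k. C + of_nat k \<noteq> 0"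
  shows "(of_nat N + 1) * (of_nat N + C) * tt ep A B C (Suc N) = (of_nat N + C - A) * (of_nat N + C - B) * tt ep A B C N"
proof -
  define G where "G = (\<lambda>n. - (ee ep (Suc N - n) * aa A B C n * (of_nat n * (C + of_nat n - 1))))"
  have "(\<Sum>n\<le>N. (of_nat N + 1) * (of_nat N + C) * ee ep (Suc N - n) * aa A B C n
          - (of_nat N + C - A) * (of_nat N + C - B) * ee ep (N - n) * aa A B C n) = (\<Sum>n<Suc N. G (Suc n) - G n)"
    unfolding lessThan_Suc_atMost G_def by (intro sum.cong refl wz_step[OF C nzC]) auto
  also have "\<dots> = G (Suc N) - G 0" by (rule sum_lessThan_telescope)
  also have "\<dots> = - (aa A B C (Suc N) * ((of_nat N + 1) * (C + of_nat N)))"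
    unfolding G_def by (simp add: ee_0 algebra_simps)
  finally have S: "(of_nat N + 1) * (of_nat N + C) * (\<Sum>n\<le>N. ee ep (Suc N - n) * aa A B C n)
      - (of_nat N + C - A) * (of_nat N + C - B) * tt ep A B C N = - (aa A B C (Suc N) * ((of_nat N + 1) * (C + of_nat N)))"
    unfolding tt_def sum_subtractf sum_distrib_left by (simp add: mult_ac)
  have "tt ep A B C (Suc N) = (\<Sum>n\<le>N. ee ep (Suc N - n) * aa A B C n) + aa A B C (Suc N)"
    unfolding tt_def by (simp add: ee_0)
  with S show ?thesis by (simp add: algebra_simps)
qed

theorem tt_closed:
  assumes C: "C = A + B + ep" and nzC: "\<And>k. C + of_nat k \<noteq> 0"
  shows "tt ep A B C N = pochhammer (C - A) N * pochhammer (C - B) N / (pochhammer C N * fact N)"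
proof (induction N)
  case 0 show ?case by (simp add: tt_def ee_0 aa_0)
next
  case (Suc N)
  have d: "(of_nat N + 1) * (of_nat N + C) \<noteq> 0" using nz1'[of N] nzC[of N] by (simp add: add.commute)
  have pc: "pochhammer C N \<noteq> 0" using nzC by (auto simp: pochhammer_eq_0_iff eq_neg_iff_add_eq_0)
  have "tt ep A B C (Suc N) = (of_nat N + C - A) * (of_nat N + C - B) * tt ep A B C N / ((of_nat N + 1) * (of_nat N + C))"
    using tt_rec[OF C nzC, of N] d by (simp add: field_simps)
  also have "\<dots> = pochhammer (C - A) (Suc N) * pochhammer (C - B) (Suc N) / (pochhammer C (Suc N) * fact (Suc N))"
    unfolding Suc.IH using d pc nzC[of N] nz1'[of N] by (simp add: pochhammer_Suc field_simps)
  finally show ?case .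
qed



lemma diag_sum:
  fixes f :: "nat \<times> nat \<Rightarrow> complex"
  assumes "f summable_on UNIV"
  shows "infsum f UNIV = (\<Sum>N. \<Sum>n\<le>N. f (N - n, n))"
proof -
  define g where "g = (\<lambda>(N::nat, n::nat). (N - n, n))"
  define S where "S = (SIGMA N:(UNIV::nat set). {..N})"
  have bij: "bij_betw g S UNIV"
    by (rule bij_betw_byWitness[where f' = "\<lambda>(m, n). (m + n, n)"]) (auto simp: g_def S_def)
  have sum1: "(\<lambda>x. f (g x)) summable_on S" using summable_on_reindex_bij_betw[OF bij, of f] assms by simp
  hence sum2: "(\<lambda>(N, n). f (g (N, n))) summable_on (SIGMA N:UNIV. {..N})"
    by (simp add: S_def case_prod_beta')
  have "infsum f UNIV = infsum (\<lambda>x. f (g x)) S" using infsum_reindex_bij_betw[OF bij, of f] by simp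
  also have "\<dots> = infsum (\<lambda>(N, n). f (g (N, n))) (SIGMA N:UNIV. {..N})"
    by (simp add: S_def case_prod_beta')
  also have "\<dots> = infsum (\<lambda>N. infsum (\<lambda>n. f (g (N, n))) {..N}) UNIV"
    using infsum_Sigma'_banach[OF sum2] by simp
  also have "\<dots> = infsum (\<lambda>N. \<Sum>n\<le>N. f (N - n, n)) UNIV" by (simp add: g_def)
  also have "\<dots> = (\<Sum>N. \<Sum>n\<le>N. f (N - n, n))"
  proof -
    have "(\<lambda>N. infsum (\<lambda>n. f (g (N, n))) {..N}) summable_on UNIV"
      using summable_on_Sigma_banach[OF sum2] by simp
    hence "(\<lambda>N. \<Sum>n\<le>N. f (N - n, n)) summable_on UNIV" by (simp add: g_def)
    hence "(\<lambda>N. \<Sum>n\<le>N. f (N - n, n)) sums infsum (\<lambda>N. \<Sum>n\<le>N. f (N - n, n)) UNIV"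
      by (intro has_sum_imp_sums has_sum_infsum)
    thus ?thesis by (simp add: sums_iff)
  qed
  finally show ?thesis .
qed

lemma nonpos_shift: "(d::complex) \<notin> \<int>\<^sub>\<le>\<^sub>0 \<Longrightarrow> d + of_nat k \<noteq> 0"
proof
  assume "d \<notin> \<int>\<^sub>\<le>\<^sub>0" "d + of_nat k = 0"
  hence "d = - of_nat k" by (simp add: eq_neg_iff_add_eq_0)
  moreover have "- (of_nat k :: complex) \<in> \<int>\<^sub>\<le>\<^sub>0" by simp
  ultimately show False using \<open>d \<notin> _\<close> by simp
qed

lemma poch_nz: "(d::complex) \<notin> \<int>\<^sub>\<le>\<^sub>0 \<Longrightarrow> pochhammer d n \<noteq> 0"
  by (auto simp: pochhammer_eq_0_iff dest: nonpos_shift[of d] simp: eq_neg_iff_add_eq_0)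

lemma kdf_term_eq:
  assumes "\<beta> \<notin> \<int>\<^sub>\<le>\<^sub>0" "d \<notin> \<int>\<^sub>\<le>\<^sub>0"
  shows "kdf_term [\<alpha>] [\<epsilon>] [\<gamma>, c0] [\<beta>] [] [d] (1/2) (1/2) m n =
    pochhammer \<alpha> (m + n) / pochhammer \<beta> (m + n) / 2 ^ (m + n) * (ee \<epsilon> m * aa \<gamma> c0 d n)"
proof -
  have "pochhammer \<beta> (m + n) \<noteq> 0" "pochhammer d n \<noteq> 0" using assms by (simp_all add: poch_nz)
  thus ?thesis unfolding kdf_term_def ee_def aa_def
    by (simp add: power_add field_simps power_one_over)
qed

lemma kdf_reduce:
  assumes conv: "kdf_converges [\<alpha>] [\<epsilon>] [\<gamma>, c0] [\<beta>] [] [d] (1/2) (1/2)"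
    and nb: "\<beta> \<notin> \<int>\<^sub>\<le>\<^sub>0" and nd: "d \<notin> \<int>\<^sub>\<le>\<^sub>0"
    and g: "\<gamma> = \<beta> - \<epsilon>" and dd: "d = c0 + \<beta>"
  shows "kdf [\<alpha>] [\<epsilon>] [\<gamma>, c0] [\<beta>] [] [d] (1/2) (1/2) = Gamma d * hgr \<alpha> (c0 + \<epsilon>) d"
proof -
  let ?f = "\<lambda>(m, n). kdf_term [\<alpha>] [\<epsilon>] [\<gamma>, c0] [\<beta>] [] [d] (1/2) (1/2) m n"
  have s: "?f summable_on UNIV" using conv unfolding kdf_converges_def .
  have "kdf [\<alpha>] [\<epsilon>] [\<gamma>, c0] [\<beta>] [] [d] (1/2) (1/2) = infsum ?f UNIV"
    unfolding kdf_def ..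
  also have "\<dots> = (\<Sum>N. \<Sum>n\<le>N. ?f (N - n, n))" by (rule diag_sum[OF s])
  also have "\<dots> = (\<Sum>N. fst_t \<alpha> (c0 + \<epsilon>) d N)"
  proof (rule suminf_cong)
    fix N
    have C: "d = \<gamma> + c0 + \<epsilon>" using g dd by simp
    have nzC: "\<And>k. d + of_nat k \<noteq> 0" using nd by (rule nonpos_shift)
    have "(\<Sum>n\<le>N. ?f (N - n, n)) = (\<Sum>n\<le>N. pochhammer \<alpha> N / pochhammer \<beta> N / 2 ^ N * (ee \<epsilon> (N - n) * aa \<gamma> c0 d n))"
      by (intro sum.cong refl) (auto simp: kdf_term_eq[OF nb nd])
    also have "\<dots> = pochhammer \<alpha> N / pochhammer \<beta> N / 2 ^ N * tt \<epsilon> \<gamma> c0 d N"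
      unfolding tt_def sum_distrib_left ..
    also have "\<dots> = pochhammer \<alpha> N / pochhammer \<beta> N / 2 ^ N * (pochhammer (d - \<gamma>) N * pochhammer (d - c0) N / (pochhammer d N * fact N))"
      unfolding tt_closed[OF C nzC] ..
    also have "d - c0 = \<beta>" using dd by simp
    also have "d - \<gamma> = c0 + \<epsilon>" using g dd by simp
    also have "pochhammer \<alpha> N / pochhammer \<beta> N / 2 ^ N * (pochhammer (c0 + \<epsilon>) N * pochhammer \<beta> N / (pochhammer d N * fact N))
        = fst_t \<alpha> (c0 + \<epsilon>) d N"
      using poch_nz[OF nb, of N] unfolding fst_t_def by (simp add: field_simps)
    finally show "(\<Sum>n\<le>N. ?f (N - n, n)) = fst_t \<alpha> (c0 + \<epsilon>) d N" by simp
  qed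
  also have "\<dots> = Fs \<alpha> (c0 + \<epsilon>) d" unfolding Fs_def ..
  also have "\<dots> = Gamma d * hgr \<alpha> (c0 + \<epsilon>) d"
    unfolding hgr_Fs[OF nd] using nd by (simp add: rGamma_inverse_Gamma Gamma_eq_zero_iff)
  finally show ?thesis .
qed

lemma powr2: "(2::complex) powr z = exp (z * of_real (ln 2))"
proof -
  have "Ln (2::complex) = of_real (ln 2)" using Ln_of_nat[of 2] by simp
  thus ?thesis by (simp add: powr_def)
qed

lemma exp_nat_ln2: "exp (of_nat i * of_real (ln 2) :: complex) = 2 ^ i"
proof -
  have "exp (of_nat i * of_real (ln 2) :: complex) = exp (of_real (ln 2)) ^ i" by (rule exp_of_nat_mult)
  also have "exp (of_real (ln 2) :: complex) = 2" by (simp add: exp_of_real)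
  finally show ?thesis .
qed

lemma negnat: "x = - (of_nat k :: complex) \<Longrightarrow> x \<in> \<int>\<^sub>\<le>\<^sub>0" by simp

lemma not_nonpos_half:
  assumes "(w::complex) \<notin> \<int>\<^sub>\<le>\<^sub>0"
  shows "w / 2 \<notin> \<int>\<^sub>\<le>\<^sub>0" "w / 2 + 1 / 2 \<notin> \<int>\<^sub>\<le>\<^sub>0" "(w + 1) / 2 \<notin> \<int>\<^sub>\<le>\<^sub>0"
proof -
  show "w / 2 \<notin> \<int>\<^sub>\<le>\<^sub>0"
  proof
    assume "w / 2 \<in> \<int>\<^sub>\<le>\<^sub>0"
    then obtain n where "w / 2 = - of_nat n" by (auto elim!: nonpos_Ints_cases')
    hence "w = - of_nat (2 * n)" by (simp add: field_simps)
    thus False using assms negnat by blast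
  qed
  show "(w + 1) / 2 \<notin> \<int>\<^sub>\<le>\<^sub>0"
  proof
    assume "(w + 1) / 2 \<in> \<int>\<^sub>\<le>\<^sub>0"
    then obtain n where "(w + 1) / 2 = - of_nat n" by (auto elim!: nonpos_Ints_cases')
    hence "w = - of_nat (2 * n + 1)"
    proof -
      assume hh: "(w + 1) / 2 = - of_nat n"
      have "w = 2 * ((w + 1) / 2) - 1" by (simp add: field_simps)
      also have "\<dots> = - of_nat (2 * n + 1)" unfolding hh by simp
      finally show ?thesis .
    qed
    thus False using assms negnat by blast
  qed
  thus "w / 2 + 1 / 2 \<notin> \<int>\<^sub>\<le>\<^sub>0" by (simp add: add_divide_distrib)
qed

lemma W:
  fixes D :: complex
  assumes "D \<notin> \<int>\<^sub>\<le>\<^sub>0"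
  shows "pochhammer D r * (of_real (sqrt pi) * exp ((1 - (D + of_nat r)) * of_real (ln 2))) * rGamma ((D + of_nat r + 1) / 2)
      = Gamma ((D + of_nat r) / 2) / Gamma D"
proof -
  define w where "w = D + of_nat r"
  have nw: "w \<notin> \<int>\<^sub>\<le>\<^sub>0"
  proof
    assume "w \<in> \<int>\<^sub>\<le>\<^sub>0"
    then obtain n where "w = - of_nat n" by (auto elim!: nonpos_Ints_cases')
    hence "D = - of_nat (n + r)" unfolding w_def by (simp add: algebra_simps)
    thus False using assms negnat by blast
  qed
  note h = not_nonpos_half[OF nw]
  have dup: "Gamma (w / 2) * Gamma (w / 2 + 1 / 2) = exp ((1 - 2 * (w / 2)) * of_real (ln 2)) * of_real (sqrt pi) * Gamma (2 * (w / 2))"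
    by (rule Gamma_legendre_duplication[OF h(1,2)])
  have e1: "w / 2 + 1 / 2 = (w + 1) / 2" by (simp add: field_simps)
  have pg: "pochhammer D r = Gamma w / Gamma D" unfolding w_def by (rule pochhammer_Gamma[OF assms])
  have g1: "Gamma ((w + 1) / 2) \<noteq> 0" using h(3) by (simp add: Gamma_eq_zero_iff)
  have g2: "Gamma D \<noteq> 0" using assms by (simp add: Gamma_eq_zero_iff)
  from dup have "Gamma (w / 2) * Gamma ((w + 1) / 2) = exp ((1 - w) * of_real (ln 2)) * of_real (sqrt pi) * Gamma w"
    unfolding e1 by simp
  hence "Gamma (w / 2) = exp ((1 - w) * of_real (ln 2)) * of_real (sqrt pi) * Gamma w * rGamma ((w + 1) / 2)"
    using g1 by (simp add: rGamma_inverse_Gamma field_simps)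
  thus ?thesis unfolding pg using g2 by (simp add: w_def[symmetric] field_simps)
qed



lemma abs4: fixes a b c G e :: complex shows "a * b * (c / G * e) = a / G * (b * (c * e))"
  by (simp add: divide_inverse mult_ac)

lemma abs5: fixes E T G g S :: complex shows "G * (T / 2 ^ i) = E / 2 ^ i * G / g * S \<longleftrightarrow> G * (T / 2 ^ i) = E / 2 ^ i * G / g * S"
  by simp

lemma abs6: fixes c x y :: complex shows "c * Gamma x / Gamma y = c * (Gamma x * rGamma y)"
  by (simp add: rGamma_inverse_Gamma divide_inverse)

lemma abs7: fixes G E g S t :: complex shows "G * (E / g * S / t) = E / t * G / g * S"
  by (simp add: divide_inverse mult_ac)

lemma part2:
  fixes i :: nat and \<alpha> \<beta> \<epsilon> :: complex
  shows
   "(kdf_converges [\<alpha>] [\<epsilon>] [\<beta> - \<epsilon>, 1 - \<alpha> - \<epsilon> - of_nat i]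
                  [\<beta>] [] [1 - \<alpha> - \<epsilon> + \<beta> - of_nat i] (1/2) (1/2)
    \<and> \<beta> \<notin> \<int>\<^sub>\<le>\<^sub>0 \<and> 1 - \<alpha> - \<epsilon> + \<beta> - of_nat i \<notin> \<int>\<^sub>\<le>\<^sub>0
    \<and> \<beta> - \<epsilon> - \<alpha> - of_nat i + 1 \<notin> \<int>\<^sub>\<le>\<^sub>0
    \<and> 1 - 2*\<alpha> - \<epsilon> + \<beta> - of_nat i \<notin> \<int>\<^sub>\<le>\<^sub>0
    \<and> (\<forall>r\<le>i. (1 - 2*\<alpha> - \<epsilon> + \<beta> - of_nat i + of_nat r) / 2 \<notin> \<int>\<^sub>\<le>\<^sub>0
              \<and> (\<beta> - \<epsilon> - of_nat i + of_nat r + 1) / 2 \<notin> \<int>\<^sub>\<le>\<^sub>0)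
    \<longrightarrow>
    kdf [\<alpha>] [\<epsilon>] [\<beta> - \<epsilon>, 1 - \<alpha> - \<epsilon> - of_nat i]
        [\<beta>] [] [1 - \<alpha> - \<epsilon> + \<beta> - of_nat i] (1/2) (1/2)
    = 2 powr (- \<alpha> - of_nat i) * Gamma (\<beta> - \<epsilon> - \<alpha> - of_nat i + 1)
        / Gamma (1 - 2*\<alpha> - \<epsilon> + \<beta> - of_nat i)
      * (\<Sum>r=0..i. of_nat (i choose r)
           * Gamma ((1 - 2*\<alpha> - \<epsilon> + \<beta> - of_nat i + of_nat r) / 2)
           / Gamma ((\<beta> - \<epsilon> - of_nat i + of_nat r + 1) / 2)))"
proof (intro impI, elim conjE)
  assume conv: "kdf_converges [\<alpha>] [\<epsilon>] [\<beta> - \<epsilon>, 1 - \<alpha> - \<epsilon> - of_nat i]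
                  [\<beta>] [] [1 - \<alpha> - \<epsilon> + \<beta> - of_nat i] (1/2) (1/2)"
    and nb: "\<beta> \<notin> \<int>\<^sub>\<le>\<^sub>0" and nd: "1 - \<alpha> - \<epsilon> + \<beta> - of_nat i \<notin> \<int>\<^sub>\<le>\<^sub>0"
    and nD: "1 - 2*\<alpha> - \<epsilon> + \<beta> - of_nat i \<notin> \<int>\<^sub>\<le>\<^sub>0"
  define d where "d = 1 - \<alpha> - \<epsilon> + \<beta> - of_nat i"
  define D where "D = 1 - 2*\<alpha> - \<epsilon> + \<beta> - of_nat i"
  define L where "L = (of_real (ln 2) :: complex)"
  have nd': "d \<notin> \<int>\<^sub>\<le>\<^sub>0" using nd by (simp add: d_def)
  have nD': "D \<notin> \<int>\<^sub>\<le>\<^sub>0" using nD by (simp add: D_def)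
  have DdA: "D = d - \<alpha>" by (simp add: D_def d_def)
  have K: "kdf [\<alpha>] [\<epsilon>] [\<beta> - \<epsilon>, 1 - \<alpha> - \<epsilon> - of_nat i] [\<beta>] [] [1 - \<alpha> - \<epsilon> + \<beta> - of_nat i] (1/2) (1/2)
      = Gamma d * hgr \<alpha> (1 - \<alpha> - of_nat i) d"
  proof -
    have "kdf [\<alpha>] [\<epsilon>] [\<beta> - \<epsilon>, 1 - \<alpha> - \<epsilon> - of_nat i] [\<beta>] [] [1 - \<alpha> - \<epsilon> + \<beta> - of_nat i] (1/2) (1/2)
        = Gamma (1 - \<alpha> - \<epsilon> + \<beta> - of_nat i) * hgr \<alpha> (1 - \<alpha> - \<epsilon> - of_nat i + \<epsilon>) (1 - \<alpha> - \<epsilon> + \<beta> - of_nat i)"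
      by (rule kdf_reduce[OF conv nb nd]) simp_all
    moreover have e: "1 - \<alpha> - \<epsilon> - of_nat i + \<epsilon> = 1 - \<alpha> - of_nat i" by simp
    ultimately show ?thesis unfolding e d_def by blast
  qed
  have Nf: "hgr \<alpha> (1 - \<alpha> - of_nat i) d = Tneg \<alpha> i d / 2 ^ i"
    using neg_family[of i \<alpha> d] by (simp add: field_simps)
  have T: "Tneg \<alpha> i d = exp (- \<alpha> * L) / Gamma D * (\<Sum>r\<le>i. of_nat (i choose r) * (Gamma ((D + of_nat r) / 2) * rGamma ((d + \<alpha> + of_nat r) / 2)))"
    unfolding Tneg_def sum_distrib_left
  proof (rule sum.cong[OF refl])
    fix r assume "r \<in> {..i}"
    have a1: "(d + of_nat r + 1 - \<alpha>) / 2 = (D + of_nat r + 1) / 2" by (simp add: DdA algebra_simps)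
    have a2: "(d + of_nat r + \<alpha>) / 2 = (d + \<alpha> + of_nat r) / 2" by (simp add: algebra_simps)
    have a3: "exp ((1 - (d + of_nat r)) * L) = exp ((1 - (D + of_nat r)) * L) * exp (- \<alpha> * L)"
      by (simp add: DdA exp_add[symmetric] algebra_simps)
    have w: "pochhammer D r * (of_real (sqrt pi) * exp ((1 - (D + of_nat r)) * L)) * rGamma ((D + of_nat r + 1) / 2)
      = Gamma ((D + of_nat r) / 2) / Gamma D" unfolding L_def by (rule W[OF nD'])
    show "of_nat (i choose r) * (pochhammer (d - \<alpha>) r * Psi \<alpha> (d + of_nat r)) =
          exp (- \<alpha> * L) / Gamma D * (of_nat (i choose r) * (Gamma ((D + of_nat r) / 2) * rGamma ((d + \<alpha> + of_nat r) / 2)))"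
    proof -
      have "of_nat (i choose r) * (pochhammer (d - \<alpha>) r * Psi \<alpha> (d + of_nat r)) =
        exp (- \<alpha> * L) * of_nat (i choose r) * ((pochhammer D r * (of_real (sqrt pi) * exp ((1 - (D + of_nat r)) * L)) * rGamma ((D + of_nat r + 1) / 2)) * rGamma ((d + \<alpha> + of_nat r) / 2))"
        unfolding Psi_def L_def[symmetric] a1 a2 a3 DdA[symmetric] by (simp add: mult_ac)
      also have "\<dots> = exp (- \<alpha> * L) * of_nat (i choose r) * (Gamma ((D + of_nat r) / 2) / Gamma D * rGamma ((d + \<alpha> + of_nat r) / 2))"
        unfolding w ..
      also have "\<dots> = exp (- \<alpha> * L) / Gamma D * (of_nat (i choose r) * (Gamma ((D + of_nat r) / 2) * rGamma ((d + \<alpha> + of_nat r) / 2)))"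
        by (rule abs4)
      finally show ?thesis .
    qed
  qed
  have R: "2 powr (- \<alpha> - of_nat i) * Gamma (\<beta> - \<epsilon> - \<alpha> - of_nat i + 1)
        / Gamma (1 - 2*\<alpha> - \<epsilon> + \<beta> - of_nat i)
      * (\<Sum>r=0..i. of_nat (i choose r)
           * Gamma ((1 - 2*\<alpha> - \<epsilon> + \<beta> - of_nat i + of_nat r) / 2)
           / Gamma ((\<beta> - \<epsilon> - of_nat i + of_nat r + 1) / 2))
      = exp (- \<alpha> * L) / 2 ^ i * Gamma d / Gamma D * (\<Sum>r\<le>i. of_nat (i choose r) * (Gamma ((D + of_nat r) / 2) * rGamma ((d + \<alpha> + of_nat r) / 2)))"
  proof -
    have p: "2 powr (- \<alpha> - of_nat i) = exp (- \<alpha> * L) / 2 ^ i"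
      unfolding powr2 L_def exp_nat_ln2[symmetric] by (simp add: exp_diff[symmetric] algebra_simps)
    have g: "\<beta> - \<epsilon> - \<alpha> - of_nat i + 1 = d" by (simp add: d_def)
    have s: "(\<Sum>r=0..i. of_nat (i choose r)
           * Gamma ((1 - 2*\<alpha> - \<epsilon> + \<beta> - of_nat i + of_nat r) / 2)
           / Gamma ((\<beta> - \<epsilon> - of_nat i + of_nat r + 1) / 2)) =
         (\<Sum>r\<le>i. of_nat (i choose r) * (Gamma ((D + of_nat r) / 2) * rGamma ((d + \<alpha> + of_nat r) / 2)))"
      unfolding atLeast0AtMost
    proof (rule sum.cong[OF refl])
      fix r
      have e1: "(\<beta> - \<epsilon> - of_nat i + of_nat r + 1) / 2 = (d + \<alpha> + of_nat r) / 2" by (simp add: d_def algebra_simps)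
      have e2: "(1 - 2*\<alpha> - \<epsilon> + \<beta> - of_nat i + of_nat r) / 2 = (D + of_nat r) / 2" by (simp add: D_def)
      show "of_nat (i choose r) * Gamma ((1 - 2*\<alpha> - \<epsilon> + \<beta> - of_nat i + of_nat r) / 2)
           / Gamma ((\<beta> - \<epsilon> - of_nat i + of_nat r + 1) / 2) =
         of_nat (i choose r) * (Gamma ((D + of_nat r) / 2) * rGamma ((d + \<alpha> + of_nat r) / 2))"
        using abs6[of "of_nat (i choose r)" "(D + of_nat r) / 2" "(d + \<alpha> + of_nat r) / 2"]
        unfolding e1 e2 .
    qed
    show ?thesis unfolding p g s unfolding D_def[symmetric] ..
  qed
  show "kdf [\<alpha>] [\<epsilon>] [\<beta> - \<epsilon>, 1 - \<alpha> - \<epsilon> - of_nat i]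
        [\<beta>] [] [1 - \<alpha> - \<epsilon> + \<beta> - of_nat i] (1/2) (1/2)
    = 2 powr (- \<alpha> - of_nat i) * Gamma (\<beta> - \<epsilon> - \<alpha> - of_nat i + 1)
        / Gamma (1 - 2*\<alpha> - \<epsilon> + \<beta> - of_nat i)
      * (\<Sum>r=0..i. of_nat (i choose r)
           * Gamma ((1 - 2*\<alpha> - \<epsilon> + \<beta> - of_nat i + of_nat r) / 2)
           / Gamma ((\<beta> - \<epsilon> - of_nat i + of_nat r + 1) / 2))"
    unfolding R K Nf T by (rule abs7)
qed



lemma abs8: fixes E G g H a S :: complex shows "E * G * g / (H * a) * S = E * G * g / (H * a) * S"
  by simp

lemma abs9: fixes G E H g a S :: complex shows "G * (E / H * S * g / a) = E * G * g / (H * a) * S"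
  by (simp add: divide_inverse mult_ac)

lemma part1:
  fixes i :: nat and \<alpha> \<beta> \<epsilon> :: complex
  shows
  "(kdf_converges [\<alpha>] [\<epsilon>] [\<beta> - \<epsilon>, 1 - \<alpha> - \<epsilon> + of_nat i]
                  [\<beta>] [] [1 - \<alpha> - \<epsilon> + \<beta> + of_nat i] (1/2) (1/2)
    \<and> \<beta> \<notin> \<int>\<^sub>\<le>\<^sub>0 \<and> 1 - \<alpha> - \<epsilon> + \<beta> + of_nat i \<notin> \<int>\<^sub>\<le>\<^sub>0
    \<and> \<beta> - \<epsilon> - \<alpha> + of_nat i + 1 \<notin> \<int>\<^sub>\<le>\<^sub>0
    \<and> \<alpha> - of_nat i \<notin> \<int>\<^sub>\<le>\<^sub>0
    \<and> 1 - 2*\<alpha> - \<epsilon> + \<beta> + of_nat i \<notin> \<int>\<^sub>\<le>\<^sub>0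
    \<and> \<alpha> \<notin> \<int>\<^sub>\<le>\<^sub>0
    \<and> (\<forall>r\<le>i. (1 - 2*\<alpha> - \<epsilon> + \<beta> + of_nat i + of_nat r) / 2 \<notin> \<int>\<^sub>\<le>\<^sub>0
              \<and> (\<beta> - \<epsilon> - of_nat i + of_nat r + 1) / 2 \<notin> \<int>\<^sub>\<le>\<^sub>0)
    \<longrightarrow>
    kdf [\<alpha>] [\<epsilon>] [\<beta> - \<epsilon>, 1 - \<alpha> - \<epsilon> + of_nat i]
        [\<beta>] [] [1 - \<alpha> - \<epsilon> + \<beta> + of_nat i] (1/2) (1/2)
    = 2 powr (of_nat i - \<alpha>) * Gamma (\<beta> - \<epsilon> - \<alpha> + of_nat i + 1) * Gamma (\<alpha> - of_nat i)
        / (Gamma (1 - 2*\<alpha> - \<epsilon> + \<beta> + of_nat i) * Gamma \<alpha>)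
      * (\<Sum>r=0..i. (-1) ^ r * of_nat (i choose r)
           * Gamma ((1 - 2*\<alpha> - \<epsilon> + \<beta> + of_nat i + of_nat r) / 2)
           / Gamma ((\<beta> - \<epsilon> - of_nat i + of_nat r + 1) / 2)))"
proof (intro impI, elim conjE)
  assume conv: "kdf_converges [\<alpha>] [\<epsilon>] [\<beta> - \<epsilon>, 1 - \<alpha> - \<epsilon> + of_nat i]
                  [\<beta>] [] [1 - \<alpha> - \<epsilon> + \<beta> + of_nat i] (1/2) (1/2)"
    and nb: "\<beta> \<notin> \<int>\<^sub>\<le>\<^sub>0" and nd: "1 - \<alpha> - \<epsilon> + \<beta> + of_nat i \<notin> \<int>\<^sub>\<le>\<^sub>0"
    and ns: "\<alpha> - of_nat i \<notin> \<int>\<^sub>\<le>\<^sub>0"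
    and nD: "1 - 2*\<alpha> - \<epsilon> + \<beta> + of_nat i \<notin> \<int>\<^sub>\<le>\<^sub>0"
  define d where "d = 1 - \<alpha> - \<epsilon> + \<beta> + of_nat i"
  define D where "D = 1 - 2*\<alpha> - \<epsilon> + \<beta> + of_nat i"
  define s where "s = \<alpha> - of_nat i"
  define L where "L = (of_real (ln 2) :: complex)"
  have nD': "D \<notin> \<int>\<^sub>\<le>\<^sub>0" using nD by (simp add: D_def)
  have DdA: "D = d - s - of_nat i" by (simp add: D_def d_def s_def)
  have K: "kdf [\<alpha>] [\<epsilon>] [\<beta> - \<epsilon>, 1 - \<alpha> - \<epsilon> + of_nat i] [\<beta>] [] [1 - \<alpha> - \<epsilon> + \<beta> + of_nat i] (1/2) (1/2)
      = Gamma d * hgr (s + of_nat i) (1 - s) d"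
  proof -
    have "kdf [\<alpha>] [\<epsilon>] [\<beta> - \<epsilon>, 1 - \<alpha> - \<epsilon> + of_nat i] [\<beta>] [] [1 - \<alpha> - \<epsilon> + \<beta> + of_nat i] (1/2) (1/2)
        = Gamma (1 - \<alpha> - \<epsilon> + \<beta> + of_nat i) * hgr \<alpha> (1 - \<alpha> - \<epsilon> + of_nat i + \<epsilon>) (1 - \<alpha> - \<epsilon> + \<beta> + of_nat i)"
      by (rule kdf_reduce[OF conv nb nd]) simp_all
    moreover have e: "1 - \<alpha> - \<epsilon> + of_nat i + \<epsilon> = 1 - s" "\<alpha> = s + of_nat i" by (simp_all add: s_def)
    ultimately show ?thesis unfolding d_def by simp
  qed
  have ps: "pochhammer s i = Gamma \<alpha> / Gamma s"
    using pochhammer_Gamma[of s i] ns by (simp add: s_def)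
  have gs: "Gamma s \<noteq> 0" using ns by (simp add: s_def Gamma_eq_zero_iff)
  have Pf: "hgr (s + of_nat i) (1 - s) d = Tpos s i d * Gamma s / Gamma \<alpha>"
  proof -
    have "Gamma \<alpha> / Gamma s * hgr (s + of_nat i) (1 - s) d = Tpos s i d"
      using pos_family[of s i d] unfolding ps .
    moreover have "Gamma \<alpha> \<noteq> 0"
    proof
      assume "Gamma \<alpha> = 0"
      hence "\<alpha> \<in> \<int>\<^sub>\<le>\<^sub>0" by (simp add: Gamma_eq_zero_iff)
      then obtain n where "\<alpha> = - of_nat n" by (auto elim!: nonpos_Ints_cases')
      hence "\<alpha> - of_nat i = - of_nat (n + i)" by simp
      from negnat[OF this] ns show False by simp
    qed
    ultimately show ?thesis using gs by (simp add: field_simps)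
  qed
  define Y where "Y = (\<lambda>r. (d - of_nat (i - r) + s) / 2)"
  have T: "Tpos s i d = exp ((of_nat i - \<alpha>) * L) / Gamma D * (\<Sum>r\<le>i. (-1) ^ r * of_nat (i choose r) * (Gamma ((D + of_nat r) / 2) * rGamma (Y r)))"
    unfolding Tpos_def sum_distrib_left atLeast0AtMost[symmetric]
    apply (subst sum.atLeastAtMost_rev)
  proof (rule sum.cong[OF refl])
    fix r assume "r \<in> {0..i}"
    hence ri: "r \<le> i" by simp
    have c: "i choose (i + 0 - r) = i choose r" using ri by (simp add: binomial_symmetric[symmetric])
    have m: "(-1 :: complex) ^ (i + (i + 0 - r)) = (-1) ^ r"
    proof -
      have h: "i + (i + 0 - r) = 2 * (i - r) + r" using ri by simp
      show ?thesis unfolding h by (simp add: power_add power_mult)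
    qed
    have pr: "i - (i + 0 - r) = r" using ri by simp
    have nr: "(of_nat (i + 0 - r) :: complex) = of_nat i - of_nat r" using ri by (simp add: of_nat_diff)
    have a1: "(d - (of_nat i - of_nat r) + 1 - s) / 2 = (D + of_nat r + 1) / 2" by (simp add: DdA algebra_simps)
    have a3: "exp ((1 - (d - (of_nat i - of_nat r))) * L) = exp ((1 - (D + of_nat r)) * L) * exp ((of_nat i - \<alpha>) * L)"
      by (simp add: DdA s_def exp_add[symmetric] algebra_simps)
    have yr: "Y r = (d - (of_nat i - of_nat r) + s) / 2" unfolding Y_def using ri by (simp add: of_nat_diff)
    have w: "pochhammer D r * (of_real (sqrt pi) * exp ((1 - (D + of_nat r)) * L)) * rGamma ((D + of_nat r + 1) / 2)
      = Gamma ((D + of_nat r) / 2) / Gamma D" unfolding L_def by (rule W[OF nD'])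
    have "of_nat (i choose (i + 0 - r)) * ((-1) ^ (i + (i + 0 - r)) * pochhammer (d - s - of_nat i) (i - (i + 0 - r)) * Psi s (d - of_nat (i + 0 - r)))
      = exp ((of_nat i - \<alpha>) * L) * ((-1) ^ r * of_nat (i choose r)) * ((pochhammer D r * (of_real (sqrt pi) * exp ((1 - (D + of_nat r)) * L)) * rGamma ((D + of_nat r + 1) / 2)) * rGamma (Y r))"
      unfolding c m pr nr Psi_def L_def[symmetric] a1 a3 DdA[symmetric] yr by (simp add: mult_ac)
    also have "\<dots> = exp ((of_nat i - \<alpha>) * L) * ((-1) ^ r * of_nat (i choose r)) * (Gamma ((D + of_nat r) / 2) / Gamma D * rGamma (Y r))"
      unfolding w ..
    also have "\<dots> = exp ((of_nat i - \<alpha>) * L) / Gamma D * ((-1) ^ r * of_nat (i choose r) * (Gamma ((D + of_nat r) / 2) * rGamma (Y r)))"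
      by (rule abs4)
    finally show "of_nat (i choose (i + 0 - r)) * ((-1) ^ (i + (i + 0 - r)) * pochhammer (d - s - of_nat i) (i - (i + 0 - r)) * Psi s (d - of_nat (i + 0 - r)))
      = exp ((of_nat i - \<alpha>) * L) / Gamma D * ((-1) ^ r * of_nat (i choose r) * (Gamma ((D + of_nat r) / 2) * rGamma (Y r)))" .
  qed
  have R: "2 powr (of_nat i - \<alpha>) * Gamma (\<beta> - \<epsilon> - \<alpha> + of_nat i + 1) * Gamma (\<alpha> - of_nat i)
        / (Gamma (1 - 2*\<alpha> - \<epsilon> + \<beta> + of_nat i) * Gamma \<alpha>)
      * (\<Sum>r=0..i. (-1) ^ r * of_nat (i choose r)
           * Gamma ((1 - 2*\<alpha> - \<epsilon> + \<beta> + of_nat i + of_nat r) / 2)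
           / Gamma ((\<beta> - \<epsilon> - of_nat i + of_nat r + 1) / 2))
      = exp ((of_nat i - \<alpha>) * L) * Gamma d * Gamma s / (Gamma D * Gamma \<alpha>) * (\<Sum>r\<le>i. (-1) ^ r * of_nat (i choose r) * (Gamma ((D + of_nat r) / 2) * rGamma (Y r)))"
  proof -
    have p: "2 powr (of_nat i - \<alpha>) = exp ((of_nat i - \<alpha>) * L)"
      unfolding powr2 L_def ..
    have g: "\<beta> - \<epsilon> - \<alpha> + of_nat i + 1 = d" "\<alpha> - of_nat i = s" by (simp_all add: d_def s_def)
    have ss: "(\<Sum>r=0..i. (-1) ^ r * of_nat (i choose r)
           * Gamma ((1 - 2*\<alpha> - \<epsilon> + \<beta> + of_nat i + of_nat r) / 2)
           / Gamma ((\<beta> - \<epsilon> - of_nat i + of_nat r + 1) / 2)) =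
         (\<Sum>r\<le>i. (-1) ^ r * of_nat (i choose r) * (Gamma ((D + of_nat r) / 2) * rGamma (Y r)))"
      unfolding atLeast0AtMost
    proof (rule sum.cong[OF refl])
      fix r assume "r \<in> {..i}"
      hence ri: "r \<le> i" by simp
      have e1: "(\<beta> - \<epsilon> - of_nat i + of_nat r + 1) / 2 = Y r"
        unfolding Y_def using ri by (simp add: of_nat_diff d_def s_def algebra_simps)
      have e2: "(1 - 2*\<alpha> - \<epsilon> + \<beta> + of_nat i + of_nat r) / 2 = (D + of_nat r) / 2" by (simp add: D_def)
      show "(-1) ^ r * of_nat (i choose r) * Gamma ((1 - 2*\<alpha> - \<epsilon> + \<beta> + of_nat i + of_nat r) / 2)
           / Gamma ((\<beta> - \<epsilon> - of_nat i + of_nat r + 1) / 2) =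
         (-1) ^ r * of_nat (i choose r) * (Gamma ((D + of_nat r) / 2) * rGamma (Y r))"
        using abs6[of "(-1) ^ r * of_nat (i choose r)" "(D + of_nat r) / 2" "Y r"]
        unfolding e1 e2 .
    qed
    show ?thesis unfolding p g ss unfolding D_def[symmetric] by (rule abs8)
  qed
  show "kdf [\<alpha>] [\<epsilon>] [\<beta> - \<epsilon>, 1 - \<alpha> - \<epsilon> + of_nat i]
        [\<beta>] [] [1 - \<alpha> - \<epsilon> + \<beta> + of_nat i] (1/2) (1/2)
    = 2 powr (of_nat i - \<alpha>) * Gamma (\<beta> - \<epsilon> - \<alpha> + of_nat i + 1) * Gamma (\<alpha> - of_nat i)
        / (Gamma (1 - 2*\<alpha> - \<epsilon> + \<beta> + of_nat i) * Gamma \<alpha>)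
      * (\<Sum>r=0..i. (-1) ^ r * of_nat (i choose r)
           * Gamma ((1 - 2*\<alpha> - \<epsilon> + \<beta> + of_nat i + of_nat r) / 2)
           / Gamma ((\<beta> - \<epsilon> - of_nat i + of_nat r + 1) / 2))"
    unfolding R K Pf T by (rule abs9)
qed


theorem theorem1:
  fixes i :: nat and \<alpha> \<beta> \<epsilon> :: complex
  shows
  "(kdf_converges [\<alpha>] [\<epsilon>] [\<beta> - \<epsilon>, 1 - \<alpha> - \<epsilon> + of_nat i]
                  [\<beta>] [] [1 - \<alpha> - \<epsilon> + \<beta> + of_nat i] (1/2) (1/2)
    \<and> \<beta> \<notin> \<int>\<^sub>\<le>\<^sub>0 \<and> 1 - \<alpha> - \<epsilon> + \<beta> + of_nat i \<notin> \<int>\<^sub>\<le>\<^sub>0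
    \<and> \<beta> - \<epsilon> - \<alpha> + of_nat i + 1 \<notin> \<int>\<^sub>\<le>\<^sub>0
    \<and> \<alpha> - of_nat i \<notin> \<int>\<^sub>\<le>\<^sub>0
    \<and> 1 - 2*\<alpha> - \<epsilon> + \<beta> + of_nat i \<notin> \<int>\<^sub>\<le>\<^sub>0
    \<and> \<alpha> \<notin> \<int>\<^sub>\<le>\<^sub>0
    \<and> (\<forall>r\<le>i. (1 - 2*\<alpha> - \<epsilon> + \<beta> + of_nat i + of_nat r) / 2 \<notin> \<int>\<^sub>\<le>\<^sub>0
              \<and> (\<beta> - \<epsilon> - of_nat i + of_nat r + 1) / 2 \<notin> \<int>\<^sub>\<le>\<^sub>0)
    \<longrightarrow>
    kdf [\<alpha>] [\<epsilon>] [\<beta> - \<epsilon>, 1 - \<alpha> - \<epsilon> + of_nat i]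
        [\<beta>] [] [1 - \<alpha> - \<epsilon> + \<beta> + of_nat i] (1/2) (1/2)
    = 2 powr (of_nat i - \<alpha>) * Gamma (\<beta> - \<epsilon> - \<alpha> + of_nat i + 1) * Gamma (\<alpha> - of_nat i)
        / (Gamma (1 - 2*\<alpha> - \<epsilon> + \<beta> + of_nat i) * Gamma \<alpha>)
      * (\<Sum>r=0..i. (-1) ^ r * of_nat (i choose r)
           * Gamma ((1 - 2*\<alpha> - \<epsilon> + \<beta> + of_nat i + of_nat r) / 2)
           / Gamma ((\<beta> - \<epsilon> - of_nat i + of_nat r + 1) / 2)))
   \<and>
   (kdf_converges [\<alpha>] [\<epsilon>] [\<beta> - \<epsilon>, 1 - \<alpha> - \<epsilon> - of_nat i]
                  [\<beta>] [] [1 - \<alpha> - \<epsilon> + \<beta> - of_nat i] (1/2) (1/2)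
    \<and> \<beta> \<notin> \<int>\<^sub>\<le>\<^sub>0 \<and> 1 - \<alpha> - \<epsilon> + \<beta> - of_nat i \<notin> \<int>\<^sub>\<le>\<^sub>0
    \<and> \<beta> - \<epsilon> - \<alpha> - of_nat i + 1 \<notin> \<int>\<^sub>\<le>\<^sub>0
    \<and> 1 - 2*\<alpha> - \<epsilon> + \<beta> - of_nat i \<notin> \<int>\<^sub>\<le>\<^sub>0
    \<and> (\<forall>r\<le>i. (1 - 2*\<alpha> - \<epsilon> + \<beta> - of_nat i + of_nat r) / 2 \<notin> \<int>\<^sub>\<le>\<^sub>0
              \<and> (\<beta> - \<epsilon> - of_nat i + of_nat r + 1) / 2 \<notin> \<int>\<^sub>\<le>\<^sub>0)
    \<longrightarrow>
    kdf [\<alpha>] [\<epsilon>] [\<beta> - \<epsilon>, 1 - \<alpha> - \<epsilon> - of_nat i]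
        [\<beta>] [] [1 - \<alpha> - \<epsilon> + \<beta> - of_nat i] (1/2) (1/2)
    = 2 powr (- \<alpha> - of_nat i) * Gamma (\<beta> - \<epsilon> - \<alpha> - of_nat i + 1)
        / Gamma (1 - 2*\<alpha> - \<epsilon> + \<beta> - of_nat i)
      * (\<Sum>r=0..i. of_nat (i choose r)
           * Gamma ((1 - 2*\<alpha> - \<epsilon> + \<beta> - of_nat i + of_nat r) / 2)
           / Gamma ((\<beta> - \<epsilon> - of_nat i + of_nat r + 1) / 2)))"
    by (rule conjI[OF part1 part2])

end
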